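(* Fix a constant $c\ge1$. There is a constant $C>0$ depending only on $c$ such that for all integers $n\ge3$, $U\ge3$ with $n/c\le U\le cn$, all $\epsilon\in(0,1/2]$, and all $t\ge C\,n\log(1/\epsilon)$, $$v(t):=\max_{i}\big\|(K^t)_i-\pi\big\|_1\le\epsilon,$$ where $(K^t)_i$ denotes the row of $K^t$ indexed by state $i$, the maximum is over all $2n$ states, and $\pi$ is the stationary distribution of the original chain.
   Context: Let $n\ge3$ and $U\ge3$ be integers. The "original chain" is the Markov chain on the $2n$ states $\{1,\dots,n,1',\dots,n'\}$ with the following transition probabilities (all unlisted transitions have probability $0$): for $2\le i\le n-1$: $i\to i$ w.p. $1/2$, $i\to i+1$ w.p. $\frac12(1-\frac1U)$, $i\to(i+1)'$ w.p. $\frac1{2U}$; for $2\le i\le n-1$: $i'\to i'$ w.p. $1/2$, $i'\to(i-1)'$ w.p. $\frac12(1-\frac1U)$, $i'\to i-1$ w.p. $\frac1{2U}$; $1\to2$ w.p. $1-\frac1U$, $1\to2'$ w.p. $\frac1U$; $1'\to1$ w.p. $1-\frac1U$, $1'\to1'$ w.p. $\frac1U$; $n\to n'$ w.p. $1-\frac1U$, $n\to n$ w.p. $\frac1U$; $n'\to(n-1)'$ w.p. $1-\frac1U$, $n'\to n-1$ w.p. $\frac1U$. $K$ is its $2n\times 2n$ row-stochastic transition matrix ($K_{xy}$ = probability of moving from $x$ to $y$), and $\pi$ its unique stationary distribution ($\pi K=\pi$). *)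

theory Defs
  imports Complex_Main
begin

text \<open>States: (i, False) is state i, (i, True) is state i', for 1 \<le> i \<le> n.\<close>

type_synonym state = "nat \<times> bool"

definition states :: "nat \<Rightarrow> state set" where
  "states n = {1..n} \<times> UNIV"

definition K :: "nat \<Rightarrow> nat \<Rightarrow> state \<Rightarrow> state \<Rightarrow> real" where
  "K n U x y = (let u = real U; i = fst x in
    if x \<notin> states n \<or> y \<notin> states n then 0
    else if \<not> snd x then
      (if i = 1 then
         (if y = (2, False) then 1 - 1/u else if y = (2, True) then 1/u else 0)
       else if i = n then
         (if y = (n, True) then 1 - 1/u else if y = (n, False) then 1/u else 0)
       else
         (if y = (i, False) then 1/2
          else if y = (i+1, False) then (1/2) * (1 - 1/u)
          else if y = (i+1, True) then 1/(2*u) else 0))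
    else
      (if i = 1 then
         (if y = (1, False) then 1 - 1/u else if y = (1, True) then 1/u else 0)
       else if i = n then
         (if y = (n-1, True) then 1 - 1/u else if y = (n-1, False) then 1/u else 0)
       else
         (if y = (i, True) then 1/2
          else if y = (i-1, True) then (1/2) * (1 - 1/u)
          else if y = (i-1, False) then 1/(2*u) else 0)))"

fun Kpow :: "nat \<Rightarrow> nat \<Rightarrow> nat \<Rightarrow> state \<Rightarrow> state \<Rightarrow> real" where
  "Kpow n U 0 x y = (if x = y then 1 else 0)"
| "Kpow n U (Suc t) x y = (\<Sum>z\<in>states n. Kpow n U t x z * K n U z y)"

definition is_stationary :: "nat \<Rightarrow> nat \<Rightarrow> (state \<Rightarrow> real) \<Rightarrow> bool" where
  "is_stationary n U p \<longleftrightarrow>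
     (\<forall>x\<in>states n. p x \<ge> 0) \<and> (\<forall>x. x \<notin> states n \<longrightarrow> p x = 0) \<and>
     (\<Sum>x\<in>states n. p x) = 1 \<and>
     (\<forall>y\<in>states n. (\<Sum>x\<in>states n. p x * K n U x y) = p y)"

definition stat :: "nat \<Rightarrow> nat \<Rightarrow> state \<Rightarrow> real" where
  "stat n U = (THE p. is_stationary n U p)"

definition v :: "nat \<Rightarrow> nat \<Rightarrow> nat \<Rightarrow> real" where
  "v n U t = (MAX x\<in>states n. \<Sum>y\<in>states n. \<bar>Kpow n U t x y - stat n U y\<bar>)"

end

theory Submission
  imports Defs
begin


fun mpow :: "nat \<Rightarrow> (nat \<Rightarrow> nat \<Rightarrow> real) \<Rightarrow> nat \<Rightarrow> nat \<Rightarrow> nat \<Rightarrow> real" where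
  "mpow N A 0 i k = (if i = k then 1 else 0)"
| "mpow N A (Suc t) i k = (\<Sum>j<N. mpow N A t i j * A j k)"

lemma sum_delta_lt: "i < (N::nat) \<Longrightarrow> (\<Sum>j<N. (if i = j then 1 else 0) * f j) = (f i :: real)"
proof -
  assume "i < N"
  have "(\<Sum>j<N. (if i = j then 1 else 0) * f j) = (\<Sum>j<N. if i = j then f j else 0)"
    by (rule sum.cong) auto
  then show ?thesis using \<open>i<N\<close> by simp
qed

lemma sum_delta_lt': "k < (N::nat) \<Longrightarrow> (\<Sum>j<N. f j * (if j = k then 1 else 0)) = (f k :: real)"
proof -
  assume "k < N"
  have "(\<Sum>j<N. f j * (if j = k then 1 else 0)) = (\<Sum>j<N. if k = j then f j else 0)"
    by (rule sum.cong) auto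
  then show ?thesis using \<open>k<N\<close> by simp
qed

lemma mpow_add: "k < N \<Longrightarrow> mpow N A (a + b) i k = (\<Sum>j<N. mpow N A a i j * mpow N A b j k)"
proof (induction b arbitrary: k)
  case 0
  then show ?case by (simp add: sum_delta_lt')
next
  case (Suc b)
  have "mpow N A (a + Suc b) i k = (\<Sum>j<N. mpow N A (a+b) i j * A j k)" by simp
  also have "\<dots> = (\<Sum>j<N. (\<Sum>l<N. mpow N A a i l * mpow N A b l j) * A j k)"
    using Suc.IH by simp
  also have "\<dots> = (\<Sum>j<N. (\<Sum>l<N. mpow N A a i l * mpow N A b l j * A j k))"
    by (simp add: sum_distrib_right)
  also have "\<dots> = (\<Sum>l<N. (\<Sum>j<N. mpow N A a i l * mpow N A b l j * A j k))"
    by (rule sum.swap)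
  also have "\<dots> = (\<Sum>l<N. mpow N A a i l * (\<Sum>j<N. mpow N A b l j * A j k))"
    by (simp add: sum_distrib_left mult.assoc)
  finally show ?case by simp
qed

lemma mpow_one: "i < N \<Longrightarrow> mpow N A 1 i j = A i j"
  using sum_delta_lt[of i N "\<lambda>l. A l j"] by simp

lemma mpow_Suc_left: "i < N \<Longrightarrow> k < N \<Longrightarrow> mpow N A (Suc t) i k = (\<Sum>j<N. A i j * mpow N A t j k)"
proof -
  assume "i < N" "k < N"
  have "mpow N A (1 + t) i k = (\<Sum>j<N. mpow N A 1 i j * mpow N A t j k)"
    using \<open>k<N\<close> by (rule mpow_add)
  also have "\<dots> = (\<Sum>j<N. A i j * mpow N A t j k)"
    using \<open>i<N\<close> by (simp only: mpow_one)
  finally show ?thesis by simp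
qed

lemma mpow_nonneg: "(\<And>i j. i < N \<Longrightarrow> j < N \<Longrightarrow> 0 \<le> A i j) \<Longrightarrow> j < N \<Longrightarrow> 0 \<le> mpow N A t i j"
  by (induction t arbitrary: j) (auto intro!: sum_nonneg mult_nonneg_nonneg)

lemma mpow_stoch: "(\<And>i j. i < N \<Longrightarrow> j < N \<Longrightarrow> 0 \<le> A i j) \<Longrightarrow> (\<And>i. i < N \<Longrightarrow> (\<Sum>j<N. A i j) = 1)
   \<Longrightarrow> i < N \<Longrightarrow> (\<Sum>j<N. mpow N A t i j) = 1"
proof (induction t)
  case 0
  then show ?case by simp
next
  case (Suc t)
  have "(\<Sum>k<N. mpow N A (Suc t) i k) = (\<Sum>k<N. \<Sum>j<N. mpow N A t i j * A j k)" by simp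
  also have "\<dots> = (\<Sum>j<N. \<Sum>k<N. mpow N A t i j * A j k)" by (rule sum.swap)
  also have "\<dots> = (\<Sum>j<N. mpow N A t i j * (\<Sum>k<N. A j k))"
    by (simp add: sum_distrib_left)
  also have "\<dots> = (\<Sum>j<N. mpow N A t i j)" using Suc.prems by simp
  finally show ?case using Suc by simp
qed

lemma mpow_mono: "(\<And>i j. i < N \<Longrightarrow> j < N \<Longrightarrow> 0 \<le> A i j) \<Longrightarrow> (\<And>i j. i < N \<Longrightarrow> j < N \<Longrightarrow> A i j \<le> A' i j)
   \<Longrightarrow> j < N \<Longrightarrow> mpow N A t i j \<le> mpow N A' t i j"
proof (induction t arbitrary: j)
  case 0 then show ?case by simp
next
  case (Suc t)
  have "mpow N A (Suc t) i j = (\<Sum>l<N. mpow N A t i l * A l j)" by simp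
  also have "\<dots> \<le> (\<Sum>l<N. mpow N A' t i l * A' l j)"
  proof (rule sum_mono)
    fix l assume l: "l \<in> {..<N}"
    have "0 \<le> mpow N A t i l" using mpow_nonneg[of N A] Suc.prems l by auto
    moreover have "0 \<le> A l j" using Suc.prems l by auto
    ultimately show "mpow N A t i l * A l j \<le> mpow N A' t i l * A' l j"
      using Suc.IH[of l] Suc.prems l by (intro mult_mono) auto
  qed
  finally show ?case by simp
qed

lemma mpow_scale: "mpow N (\<lambda>i j. c * A i j) t i k = c ^ t * mpow N A t i k"
  by (induction t arbitrary: k) (auto simp: sum_distrib_left mult_ac)

lemma mpow_stat: "(\<And>k. k < N \<Longrightarrow> (\<Sum>i<N. p i * A i k) = p k) \<Longrightarrow> k < N \<Longrightarrow>
   (\<Sum>i<N. p i * mpow N A t i k) = p k"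
proof (induction t arbitrary: k)
  case 0
  then show ?case by (simp add: sum_delta_lt')
next
  case (Suc t)
  have "(\<Sum>i<N. p i * mpow N A (Suc t) i k) = (\<Sum>i<N. \<Sum>j<N. p i * mpow N A t i j * A j k)"
    by (simp add: sum_distrib_left mult.assoc)
  also have "\<dots> = (\<Sum>j<N. \<Sum>i<N. p i * mpow N A t i j * A j k)" by (rule sum.swap)
  also have "\<dots> = (\<Sum>j<N. (\<Sum>i<N. p i * mpow N A t i j) * A j k)"
    by (simp add: sum_distrib_right)
  also have "\<dots> = (\<Sum>j<N. p j * A j k)" using Suc by simp
  finally show ?case using Suc by simp
qed

lemma mpow_conj:
  assumes bij: "bij_betw \<rho> {..<N} {..<N}" and BA: "\<And>i k. i < N \<Longrightarrow> k < N \<Longrightarrow> B i k = A (\<rho> i) (\<rho> k)"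
  shows "i < N \<Longrightarrow> k < N \<Longrightarrow> mpow N B t i k = mpow N A t (\<rho> i) (\<rho> k)"
proof (induction t arbitrary: k)
  case 0
  have "\<rho> i = \<rho> k \<longleftrightarrow> i = k" using bij 0 by (auto simp: bij_betw_def inj_on_def)
  then show ?case by simp
next
  case (Suc t)
  have "mpow N B (Suc t) i k = (\<Sum>j<N. mpow N A t (\<rho> i) (\<rho> j) * A (\<rho> j) (\<rho> k))"
    using Suc by (simp add: BA)
  also have "\<dots> = (\<Sum>j<N. mpow N A t (\<rho> i) j * A j (\<rho> k))"
    using sum.reindex_bij_betw[OF bij, of "\<lambda>j. mpow N A t (\<rho> i) j * A j (\<rho> k)"] by simp
  also have "\<dots> = mpow N A (Suc t) (\<rho> i) (\<rho> k)" by simp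
  finally show ?case .
qed



definition sucm :: "nat \<Rightarrow> nat \<Rightarrow> nat" where "sucm n j = (if j + 1 = 2*n then 0 else j + 1)"
definition prem :: "nat \<Rightarrow> nat \<Rightarrow> nat" where "prem n j = (if j = 0 then 2*n - 1 else j - 1)"
definition negm :: "nat \<Rightarrow> nat \<Rightarrow> nat" where "negm n j = (if j = 0 then 0 else 2*n - j)"
definition special :: "nat \<Rightarrow> nat \<Rightarrow> bool" where "special n j \<longleftrightarrow> j = 0 \<or> j = 1 \<or> j = n \<or> j = n+1"
definition qs :: "nat \<Rightarrow> nat \<Rightarrow> real" where "qs n j = (if special n j then 0 else 1/2)"
definition Qm :: "nat \<Rightarrow> nat \<Rightarrow> nat \<Rightarrow> real" where
  "Qm n j j' = (if j' = j then qs n j else 0) + (if j' = sucm n j then 1 - qs n j else 0)"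
definition bs :: "nat \<Rightarrow> nat \<Rightarrow> real" where "bs n a = qs n (negm n a)"
definition Bm :: "nat \<Rightarrow> nat \<Rightarrow> nat \<Rightarrow> real" where
  "Bm n a a' = (if a' = a then bs n a else 0) + (if a' = prem n a then 1 - bs n a else 0)"
definition wt :: "nat \<Rightarrow> nat \<Rightarrow> real" where "wt n j = (if special n j then 1 else 2)"

lemma sucm_lt[simp]: "j < 2*n \<Longrightarrow> sucm n j < 2*n" by (auto simp: sucm_def)
lemma prem_lt[simp]: "j < 2*n \<Longrightarrow> prem n j < 2*n" by (auto simp: prem_def)
lemma negm_lt[simp]: "j < 2*n \<Longrightarrow> negm n j < 2*n" by (auto simp: negm_def)
lemma prem_sucm[simp]: "j < 2*n \<Longrightarrow> prem n (sucm n j) = j" by (auto simp: prem_def sucm_def)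
lemma sucm_prem[simp]: "j < 2*n \<Longrightarrow> sucm n (prem n j) = j" by (auto simp: prem_def sucm_def)
lemma negm_negm[simp]: "j < 2*n \<Longrightarrow> negm n (negm n j) = j" by (auto simp: negm_def)
lemma sucm_neq: "n \<ge> 1 \<Longrightarrow> j < 2*n \<Longrightarrow> sucm n j \<noteq> j" by (auto simp: sucm_def) presburger
lemma prem_neq: "n \<ge> 1 \<Longrightarrow> j < 2*n \<Longrightarrow> prem n j \<noteq> j" by (auto simp: prem_def)
lemma negm_prem: "j < 2*n \<Longrightarrow> negm n (prem n j) = sucm n (negm n j)" by (auto simp: negm_def prem_def sucm_def)
lemma negm_sucm: "j < 2*n \<Longrightarrow> negm n (sucm n j) = prem n (negm n j)" by (auto simp: negm_def prem_def sucm_def)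
lemma sucm_eq_iff: "j < 2*n \<Longrightarrow> k < 2*n \<Longrightarrow> (k = sucm n j) = (j = prem n k)"
  by (auto simp: prem_def sucm_def)

lemma qs_nonneg: "0 \<le> qs n j" by (simp add: qs_def)
lemma qs_le: "qs n j \<le> 1/2" by (simp add: qs_def)
lemma bs_nonneg: "0 \<le> bs n j" by (simp add: bs_def qs_nonneg)
lemma bs_le: "bs n j \<le> 1/2" by (simp add: bs_def qs_def)

lemma bij_prem: "bij_betw (prem n) {..<2*n} {..<2*n}"
proof (rule bij_betw_byWitness[where f'="sucm n"])
qed auto

lemma bij_negm: "bij_betw (negm n) {..<2*n} {..<2*n}"
proof (rule bij_betw_byWitness[where f'="negm n"])
qed auto

lemma sum_prem: "(\<Sum>k<2*n. f (prem n k)) = (\<Sum>k<2*n. (f k :: real))"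
  using sum.reindex_bij_betw[OF bij_prem, of f] by simp

lemma Bm_Qm: "a < 2*n \<Longrightarrow> a' < 2*n \<Longrightarrow> Bm n a a' = Qm n (negm n a) (negm n a')"
proof -
  assume a: "a < 2*n" and a': "a' < 2*n"
  have e1: "(negm n a' = negm n a) = (a' = a)"
    using a a' by (metis negm_negm)
  have e2: "(negm n a' = sucm n (negm n a)) = (a' = prem n a)"
    using a a' by (metis negm_negm negm_prem prem_lt)
  show ?thesis by (simp add: Bm_def Qm_def bs_def e1 e2)
qed

lemma Qm_nonneg: "0 \<le> Qm n j j'"
  using qs_le[of n j] qs_nonneg[of n j] by (simp add: Qm_def)
lemma Bm_nonneg: "0 \<le> Bm n j j'"
  using bs_le[of n j] bs_nonneg[of n j] by (simp add: Bm_def)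

lemma sum_two_pts:
  assumes "a < (N::nat)" "b < N" "a \<noteq> b"
  shows "(\<Sum>j<N. ((if j = a then x else 0) + (if j = b then y else 0)) * f j) = x * f a + (y * f b :: real)"
proof -
  have "(\<Sum>j<N. ((if j = a then x else 0) + (if j = b then y else 0)) * f j)
      = (\<Sum>j<N. (if a = j then x * f j else 0) + (if b = j then y * f j else 0))"
    using assms by (intro sum.cong) auto
  also have "\<dots> = (\<Sum>j<N. (if a = j then x * f j else 0)) + (\<Sum>j<N. (if b = j then y * f j else 0))"
    by (rule sum.distrib)
  finally show ?thesis using assms by simp
qed

lemma Qm_row: "n \<ge> 1 \<Longrightarrow> k < 2*n \<Longrightarrow> (\<Sum>j<2*n. Qm n k j * h j) = qs n k * h k + (1 - qs n k) * h (sucm n k)"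
  unfolding Qm_def using sum_two_pts[of k "2*n" "sucm n k" "qs n k" "1 - qs n k" h] sucm_neq[of n k] by simp

lemma Bm_row: "n \<ge> 1 \<Longrightarrow> k < 2*n \<Longrightarrow> (\<Sum>j<2*n. Bm n k j * h j) = bs n k * h k + (1 - bs n k) * h (prem n k)"
  unfolding Bm_def using sum_two_pts[of k "2*n" "prem n k" "bs n k" "1 - bs n k" h] prem_neq[of n k] by simp

lemma Qm_col: "n \<ge> 1 \<Longrightarrow> k < 2*n \<Longrightarrow> (\<Sum>j<2*n. M j * Qm n j k) = M k * qs n k + M (prem n k) * (1 - qs n (prem n k))"
proof -
  assume n: "n \<ge> 1" and k: "k < 2*n"
  have "(\<Sum>j<2*n. M j * Qm n j k) = (\<Sum>j<2*n. (if k = j then M j * qs n j else 0) + (if prem n k = j then M j * (1 - qs n j) else 0))"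
    using k prem_neq[OF n k] by (intro sum.cong) (auto simp: Qm_def sucm_eq_iff)
  also have "\<dots> = M k * qs n k + M (prem n k) * (1 - qs n (prem n k))"
    using k n prem_neq[OF n k] by (simp add: sum.distrib)
  finally show ?thesis .
qed

lemma prem_eq_iff: "j < 2*n \<Longrightarrow> k < 2*n \<Longrightarrow> (k = prem n j) = (j = sucm n k)"
  by (auto simp: prem_def sucm_def)

lemma Bm_col: "n \<ge> 1 \<Longrightarrow> k < 2*n \<Longrightarrow> (\<Sum>j<2*n. M j * Bm n j k) = M k * bs n k + M (sucm n k) * (1 - bs n (sucm n k))"
proof -
  assume n: "n \<ge> 1" and k: "k < 2*n"
  have "(\<Sum>j<2*n. M j * Bm n j k) = (\<Sum>j<2*n. (if k = j then M j * bs n j else 0) + (if sucm n k = j then M j * (1 - bs n j) else 0))"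
    using k sucm_neq[OF n k] by (intro sum.cong) (auto simp: Bm_def prem_eq_iff)
  also have "\<dots> = M k * bs n k + M (sucm n k) * (1 - bs n (sucm n k))"
    using k n sucm_neq[OF n k] by (simp add: sum.distrib)
  finally show ?thesis .
qed

lemma Qm_stoch: "n \<ge> 1 \<Longrightarrow> k < 2*n \<Longrightarrow> (\<Sum>j<2*n. Qm n k j) = 1"
  using Qm_row[of n k "\<lambda>_. 1"] by simp
lemma Bm_stoch: "n \<ge> 1 \<Longrightarrow> k < 2*n \<Longrightarrow> (\<Sum>j<2*n. Bm n k j) = 1"
  using Bm_row[of n k "\<lambda>_. 1"] by simp

lemma wt_stat_step: "n \<ge> 3 \<Longrightarrow> k < 2*n \<Longrightarrow> wt n k * qs n k + wt n (prem n k) * (1 - qs n (prem n k)) = wt n k"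
  by (auto simp: wt_def qs_def special_def prem_def)

lemma wt_stat: "n \<ge> 3 \<Longrightarrow> k < 2*n \<Longrightarrow> (\<Sum>j<2*n. wt n j * Qm n j k) = wt n k"
  using Qm_col[of n k "wt n"] wt_stat_step[of n k] by simp

lemma wtB_stat: "n \<ge> 3 \<Longrightarrow> k < 2*n \<Longrightarrow> (\<Sum>j<2*n. wt n (negm n j) * Bm n j k) = wt n (negm n k)"
proof -
  assume n: "n \<ge> 3" and k: "k < 2*n"
  have "(\<Sum>j<2*n. wt n (negm n j) * Bm n j k) = (\<Sum>j<2*n. wt n (negm n j) * Qm n (negm n j) (negm n k))"
    using k by (intro sum.cong) (auto simp: Bm_Qm)
  also have "\<dots> = (\<Sum>j<2*n. wt n j * Qm n j (negm n k))"
    using sum.reindex_bij_betw[OF bij_negm, of "\<lambda>j. wt n j * Qm n j (negm n k)"] by simp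
  also have "\<dots> = wt n (negm n k)" using wt_stat n k by simp
  finally show ?thesis .
qed

lemma wt_ge1: "1 \<le> wt n j" by (simp add: wt_def)
lemma wt_le2: "wt n j \<le> 2" by (simp add: wt_def)



definition amod :: "nat \<Rightarrow> nat \<Rightarrow> nat \<Rightarrow> nat" where "amod n k d = (k + d) mod (2*n)"

definition Ptr :: "nat \<Rightarrow> nat \<Rightarrow> nat \<Rightarrow> nat \<Rightarrow> nat \<Rightarrow> real" where
  "Ptr n k d k' d' =
     (if k' = k \<and> d' = d then qs n k * bs n (amod n k d) else 0)
   + (if k' = k \<and> d' + 1 = d then qs n k * (1 - bs n (amod n k d)) else 0)
   + (if k' = sucm n k \<and> d' + 1 = d then (1 - qs n k) * bs n (amod n k d) else 0)
   + (if k' = sucm n k \<and> d' + 2 = d then (1 - qs n k) * (1 - bs n (amod n k d)) else 0)"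

fun Phi :: "nat \<Rightarrow> nat \<Rightarrow> nat \<Rightarrow> nat \<Rightarrow> nat \<Rightarrow> real" where
  "Phi n x 0 k d = (if k = x \<and> 2*n+1 \<le> d \<and> d \<le> 4*n then 1 else 0)"
| "Phi n x (Suc s) k' d' = (\<Sum>k<2*n. \<Sum>d\<in>{1..4*n}. Phi n x s k d * Ptr n k d k' d')"

lemma Ptr_nonneg: "0 \<le> Ptr n k d k' d'"
  using qs_le[of n k] qs_nonneg[of n k] bs_le[of n "amod n k d"] bs_nonneg[of n "amod n k d"]
  by (simp add: Ptr_def)

lemma Phi_nonneg: "0 \<le> Phi n x s k d"
  by (induction s arbitrary: k d) (auto intro!: sum_nonneg mult_nonneg_nonneg Ptr_nonneg)

lemma Phi_supp: "d + 2*s < 2*n+1 \<Longrightarrow> Phi n x s k d = 0"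
proof (induction s arbitrary: k d)
  case 0 then show ?case by simp
next
  case (Suc s)
  have "\<And>k0 d0. Phi n x s k0 d0 * Ptr n k0 d0 k d = 0"
  proof -
    fix k0 d0
    show "Phi n x s k0 d0 * Ptr n k0 d0 k d = 0"
    proof (cases "d0 \<le> d + 2")
      case True
      then have "d0 + 2*s < 2*n+1" using Suc.prems by simp
      then show ?thesis using Suc.IH by simp
    next
      case False
      then show ?thesis by (simp add: Ptr_def)
    qed
  qed
  then show ?case by (simp only: Phi.simps sum.neutral_const)
qed

lemma delta_pull:
  assumes "b < 2*(n::nat)" "\<And>k. k < 2*n \<Longrightarrow> (k' = g k) = (k = b)"
  shows "(\<Sum>k<2*n. \<Sum>d\<in>{1..4*n}. F k d * (if k' = g k \<and> d' + e = d then w k d else 0))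
        = (if d' + e \<in> {1..4*n} then F b (d'+e) * w b (d'+e) else (0::real))"
proof -
  have r: "\<And>k d. F k d * (if k' = g k \<and> d' + e = d then w k d else 0)
     = (if k' = g k then (if d' + e = d then F k d * w k d else 0) else 0)" by simp
  have "(\<Sum>k<2*n. \<Sum>d\<in>{1..4*n}. F k d * (if k' = g k \<and> d' + e = d then w k d else 0))
      = (\<Sum>k<2*n. if k' = g k then (\<Sum>d\<in>{1..4*n}. if d' + e = d then F k d * w k d else 0) else 0)"
    apply (simp only: r)
    apply (rule sum.cong[OF refl])
    subgoal for k by (cases "k' = g k") simp_all
    done
  also have "\<dots> = (\<Sum>k<2*n. if b = k then (\<Sum>d\<in>{1..4*n}. if d' + e = d then F k d * w k d else 0) else 0)"
    using assms(2) by (intro sum.cong) auto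
  also have "\<dots> = (\<Sum>d\<in>{1..4*n}. if d' + e = d then F b d * w b d else 0)"
    using assms(1) by simp
  also have "\<dots> = (if d' + e \<in> {1..4*n} then F b (d'+e) * w b (d'+e) else 0)"
    by (rule sum.delta'[OF finite_atLeastAtMost])
  finally show ?thesis .
qed

lemma Phi_pull:
  assumes n: "n \<ge> 1" and k': "k' < 2*n"
  shows "Phi n x (Suc s) k' d' =
     (if d' \<in> {1..4*n} then Phi n x s k' d' * (qs n k' * bs n (amod n k' d')) else 0)
   + (if d'+1 \<in> {1..4*n} then Phi n x s k' (d'+1) * (qs n k' * (1 - bs n (amod n k' (d'+1)))) else 0)
   + (if d'+1 \<in> {1..4*n} then Phi n x s (prem n k') (d'+1) * ((1 - qs n (prem n k')) * bs n (amod n (prem n k') (d'+1))) else 0)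
   + (if d'+2 \<in> {1..4*n} then Phi n x s (prem n k') (d'+2) * ((1 - qs n (prem n k')) * (1 - bs n (amod n (prem n k') (d'+2)))) else 0)"
proof -
  let ?F = "Phi n x s"
  have e: "\<And>k d. Ptr n k d k' d' =
     (if k' = id k \<and> d' + 0 = d then qs n k * bs n (amod n k d) else 0)
   + (if k' = id k \<and> d' + 1 = d then qs n k * (1 - bs n (amod n k d)) else 0)
   + (if k' = sucm n k \<and> d' + 1 = d then (1 - qs n k) * bs n (amod n k d) else 0)
   + (if k' = sucm n k \<and> d' + 2 = d then (1 - qs n k) * (1 - bs n (amod n k d)) else 0)"
    by (simp add: Ptr_def)
  have i1: "\<And>k. k < 2*n \<Longrightarrow> (k' = id k) = (k = k')" by auto
  have i2: "\<And>k. k < 2*n \<Longrightarrow> (k' = sucm n k) = (k = prem n k')" using k' by (simp add: sucm_eq_iff)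
  have "Phi n x (Suc s) k' d' =
      (\<Sum>k<2*n. \<Sum>d\<in>{1..4*n}. ?F k d * (if k' = id k \<and> d' + 0 = d then qs n k * bs n (amod n k d) else 0))
    + (\<Sum>k<2*n. \<Sum>d\<in>{1..4*n}. ?F k d * (if k' = id k \<and> d' + 1 = d then qs n k * (1 - bs n (amod n k d)) else 0))
    + (\<Sum>k<2*n. \<Sum>d\<in>{1..4*n}. ?F k d * (if k' = sucm n k \<and> d' + 1 = d then (1 - qs n k) * bs n (amod n k d) else 0))
    + (\<Sum>k<2*n. \<Sum>d\<in>{1..4*n}. ?F k d * (if k' = sucm n k \<and> d' + 2 = d then (1 - qs n k) * (1 - bs n (amod n k d)) else 0))"
    by (simp only: Phi.simps e distrib_left sum.distrib)
  then show ?thesis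
    by (simp only: delta_pull[OF k' i1] delta_pull[OF prem_lt[OF k'] i2]) simp
qed



lemma sucm_mod: "n \<ge> 1 \<Longrightarrow> sucm n (m mod (2*n)) = (m + 1) mod (2*n)"
  by (simp add: sucm_def mod_Suc)

lemma amod_lt: "n \<ge> 1 \<Longrightarrow> amod n k d < 2*n" by (simp add: amod_def)

lemma amod_1: "n \<ge> 1 \<Longrightarrow> amod n k (d+1) = sucm n (amod n k d)"
  by (simp add: amod_def sucm_mod)

lemma amod_prem1: "n \<ge> 1 \<Longrightarrow> k < 2*n \<Longrightarrow> amod n (prem n k) (d+1) = amod n k d"
proof -
  assume n: "n \<ge> 1" and k: "k < 2*n"
  show ?thesis
  proof (cases "k = 0")
    case True
    have e: "prem n k + (d+1) = d + 2*n" using True n by (simp add: prem_def)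
    have "amod n (prem n k) (d+1) = (d + 2*n) mod (2*n)" unfolding amod_def e ..
    then show ?thesis using True by (simp add: amod_def)
  next
    case False
    then have e: "prem n k + (d+1) = k + d" by (simp add: prem_def)
    show ?thesis unfolding amod_def e ..
  qed
qed

lemma amod_prem2: "n \<ge> 1 \<Longrightarrow> k < 2*n \<Longrightarrow> amod n (prem n k) (d+2) = sucm n (amod n k d)"
  using amod_prem1[of n k "d+1"] amod_1[of n k d] by simp

fun Xg :: "real \<Rightarrow> nat \<Rightarrow> nat \<Rightarrow> nat \<Rightarrow> nat \<Rightarrow> real" where
  "Xg \<mu> n x 0 k = (if k = x then 1 else 0)"
| "Xg \<mu> n x (Suc s) k = Xg \<mu> n x s k * qs n k + Xg \<mu> n x s (prem n k) * (1 - qs n (prem n k)) / \<mu>"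

fun Yg :: "real \<Rightarrow> nat \<Rightarrow> nat \<Rightarrow> nat \<Rightarrow> real" where
  "Yg \<mu> n 0 a = \<mu> ^ (4*n)"
| "Yg \<mu> n (Suc s) a = Yg \<mu> n s a * bs n a + Yg \<mu> n s (sucm n a) * (1 - bs n (sucm n a)) / \<mu>"

lemma qs_le1: "0 \<le> 1 - qs n j" using qs_le[of n j] by simp
lemma bs_le1: "0 \<le> 1 - bs n j" using bs_le[of n j] by simp

lemma Xg_nonneg: "\<mu> > 0 \<Longrightarrow> 0 \<le> Xg \<mu> n x s k"
  by (induction s arbitrary: k) (auto intro!: add_nonneg_nonneg mult_nonneg_nonneg divide_nonneg_pos qs_le1 qs_nonneg)

lemma Yg_nonneg: "\<mu> > 0 \<Longrightarrow> 0 \<le> Yg \<mu> n s a"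
  by (induction s arbitrary: a) (auto intro!: add_nonneg_nonneg mult_nonneg_nonneg divide_nonneg_pos bs_le1 bs_nonneg)

lemma term_bound:
  assumes "\<mu> \<ge> 1" "0 \<le> c" "Phi n x s k d' * \<mu> ^ d' \<le> B" "d' = d + e"
  shows "(if d' \<in> {1..4*n} then Phi n x s k d' * c else 0) * \<mu> ^ d \<le> B * c / \<mu> ^ e"
proof -
  have mp: "\<mu> ^ e > 0" using assms(1) by simp
  have "Phi n x s k d' * c * \<mu> ^ d = (Phi n x s k d' * \<mu> ^ d') * c / \<mu> ^ e"
    using assms(4) assms(1) mp by (simp add: power_add)
  also have "\<dots> \<le> B * c / \<mu> ^ e"
    using assms(2,3) mp by (intro divide_right_mono mult_right_mono) auto
  finally have "Phi n x s k d' * c * \<mu> ^ d \<le> B * c / \<mu> ^ e" .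
  moreover have "0 \<le> B * c / \<mu> ^ e"
  proof -
    have "0 \<le> Phi n x s k d' * \<mu> ^ d'" using Phi_nonneg[of n x s k d'] assms(1) by simp
    then have "0 \<le> B" using assms(3) by linarith
    then show ?thesis using assms(2) mp by simp
  qed
  ultimately show ?thesis by auto
qed

lemma prod_bound:
  assumes mu: "\<mu> \<ge> 1" and n: "n \<ge> 1" and k: "k < 2*n"
  shows "Phi n x s k d * \<mu> ^ d \<le> Xg \<mu> n x s k * Yg \<mu> n s (amod n k d)"
  using k
proof (induction s arbitrary: k d)
  case 0
  show ?case
  proof (cases "k = x \<and> 2*n+1 \<le> d \<and> d \<le> 4*n")
    case True
    then have "\<mu> ^ d \<le> \<mu> ^ (4*n)" using mu by (intro power_increasing) auto
    then show ?thesis using True by simp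
  next
    case False
    then show ?thesis using Xg_nonneg[of \<mu>] Yg_nonneg[of \<mu>] mu by auto
  qed
next
  case (Suc s)
  let ?a = "amod n k d"
  let ?X = "Xg \<mu> n x s" and ?Y = "Yg \<mu> n s"
  have pk: "prem n k < 2*n" using Suc.prems by simp
  have mp: "\<mu> > 0" using mu by simp
  have q1: "0 \<le> qs n k * bs n ?a" "0 \<le> qs n k * (1 - bs n (amod n k (d+1)))"
    "0 \<le> (1 - qs n (prem n k)) * bs n (amod n (prem n k) (d+1))"
    "0 \<le> (1 - qs n (prem n k)) * (1 - bs n (amod n (prem n k) (d+2)))"
    by (auto intro!: mult_nonneg_nonneg qs_le1 bs_le1 qs_nonneg bs_nonneg)
  have t1: "(if d \<in> {1..4*n} then Phi n x s k d * (qs n k * bs n ?a) else 0) * \<mu> ^ d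
      \<le> ?X k * ?Y ?a * (qs n k * bs n ?a) / \<mu> ^ 0"
    by (rule term_bound[OF mu q1(1) Suc.IH[OF Suc.prems]]) simp
  have t2: "(if d+1 \<in> {1..4*n} then Phi n x s k (d+1) * (qs n k * (1 - bs n (amod n k (d+1)))) else 0) * \<mu> ^ d
      \<le> ?X k * ?Y (amod n k (d+1)) * (qs n k * (1 - bs n (amod n k (d+1)))) / \<mu> ^ 1"
    by (rule term_bound[OF mu q1(2) Suc.IH[OF Suc.prems]]) simp
  have t3: "(if d+1 \<in> {1..4*n} then Phi n x s (prem n k) (d+1) * ((1 - qs n (prem n k)) * bs n (amod n (prem n k) (d+1))) else 0) * \<mu> ^ d
      \<le> ?X (prem n k) * ?Y (amod n (prem n k) (d+1)) * ((1 - qs n (prem n k)) * bs n (amod n (prem n k) (d+1))) / \<mu> ^ 1"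
    by (rule term_bound[OF mu q1(3) Suc.IH[OF pk]]) simp
  have t4: "(if d+2 \<in> {1..4*n} then Phi n x s (prem n k) (d+2) * ((1 - qs n (prem n k)) * (1 - bs n (amod n (prem n k) (d+2)))) else 0) * \<mu> ^ d
      \<le> ?X (prem n k) * ?Y (amod n (prem n k) (d+2)) * ((1 - qs n (prem n k)) * (1 - bs n (amod n (prem n k) (d+2)))) / \<mu> ^ 2"
    by (rule term_bound[OF mu q1(4) Suc.IH[OF pk]]) simp
  have "Phi n x (Suc s) k d * \<mu> ^ d \<le>
      ?X k * ?Y ?a * (qs n k * bs n ?a) / \<mu> ^ 0
    + ?X k * ?Y (amod n k (d+1)) * (qs n k * (1 - bs n (amod n k (d+1)))) / \<mu> ^ 1
    + ?X (prem n k) * ?Y (amod n (prem n k) (d+1)) * ((1 - qs n (prem n k)) * bs n (amod n (prem n k) (d+1))) / \<mu> ^ 1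
    + ?X (prem n k) * ?Y (amod n (prem n k) (d+2)) * ((1 - qs n (prem n k)) * (1 - bs n (amod n (prem n k) (d+2)))) / \<mu> ^ 2"
    unfolding Phi_pull[OF n Suc.prems] distrib_right using t1 t2 t3 t4 by linarith
  also have "\<dots> = (?X k * qs n k + ?X (prem n k) * (1 - qs n (prem n k)) / \<mu>) *
                  (?Y ?a * bs n ?a + ?Y (sucm n ?a) * (1 - bs n (sucm n ?a)) / \<mu>)"
    apply (simp only: amod_prem2[OF n Suc.prems])
    apply (simp only: amod_prem1[OF n Suc.prems])
    apply (simp only: amod_1[OF n])
    using mp by (simp add: field_simps power2_eq_square)
  also have "\<dots> = Xg \<mu> n x (Suc s) k * Yg \<mu> n (Suc s) ?a" by simp
  finally show ?case .
qed

lemma Xg1_mpow: "n \<ge> 1 \<Longrightarrow> k < 2*n \<Longrightarrow> Xg 1 n x s k = mpow (2*n) (Qm n) s x k"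
proof (induction s arbitrary: k)
  case 0 then show ?case by simp
next
  case (Suc s)
  have "mpow (2*n) (Qm n) (Suc s) x k = mpow (2*n) (Qm n) s x k * qs n k + mpow (2*n) (Qm n) s x (prem n k) * (1 - qs n (prem n k))"
    using Qm_col[OF Suc.prems, of "\<lambda>j. mpow (2*n) (Qm n) s x j"] by simp
  then show ?case using Suc by simp
qed

lemma wtB_col: "n \<ge> 3 \<Longrightarrow> a < 2*n \<Longrightarrow> wt n (negm n a) * bs n a + wt n (negm n (sucm n a)) * (1 - bs n (sucm n a)) = wt n (negm n a)"
  using Bm_col[of n a "\<lambda>j. wt n (negm n j)"] wtB_stat[of n a] by simp

lemma Yg1_le: "n \<ge> 3 \<Longrightarrow> a < 2*n \<Longrightarrow> Yg 1 n s a \<le> wt n (negm n a)"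
proof (induction s arbitrary: a)
  case 0 then show ?case using wt_ge1[of n] by simp
next
  case (Suc s)
  have s1: "sucm n a < 2*n" using Suc.prems by simp
  have "Yg 1 n (Suc s) a = Yg 1 n s a * bs n a + Yg 1 n s (sucm n a) * (1 - bs n (sucm n a))" by simp
  also have "\<dots> \<le> wt n (negm n a) * bs n a + wt n (negm n (sucm n a)) * (1 - bs n (sucm n a))"
    using Suc.IH[OF Suc.prems(1,2)] Suc.IH[OF Suc.prems(1) s1] bs_nonneg[of n] bs_le1[of n]
    by (intro add_mono mult_right_mono) auto
  also have "\<dots> = wt n (negm n a)" using wtB_col Suc.prems by simp
  finally show ?case .
qed

lemma Yg2_le: "n \<ge> 3 \<Longrightarrow> a < 2*n \<Longrightarrow> Yg 2 n s a \<le> (3/4)^s * 2^(4*n) * wt n (negm n a)"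
proof (induction s arbitrary: a)
  case 0 then show ?case using wt_ge1[of n "negm n a"] by simp
next
  case (Suc s)
  have s1: "sucm n a < 2*n" using Suc.prems by simp
  let ?c = "(3/4::real)^s * 2^(4*n)"
  have c0: "0 \<le> ?c" by simp
  have "Yg 2 n (Suc s) a = Yg 2 n s a * bs n a + Yg 2 n s (sucm n a) * (1 - bs n (sucm n a)) / 2" by simp
  also have "\<dots> \<le> ?c * wt n (negm n a) * bs n a + ?c * wt n (negm n (sucm n a)) * (1 - bs n (sucm n a)) / 2"
    using Suc.IH[OF Suc.prems(1,2)] Suc.IH[OF Suc.prems(1) s1] bs_nonneg[of n] bs_le1[of n]
    by (intro add_mono mult_right_mono divide_right_mono) auto
  also have "\<dots> = ?c * (wt n (negm n a) * bs n a + wt n (negm n (sucm n a)) * (1 - bs n (sucm n a)) / 2)"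
    by (simp add: algebra_simps)
  also have "wt n (negm n (sucm n a)) * (1 - bs n (sucm n a)) = wt n (negm n a) * (1 - bs n a)"
    using wtB_col[OF Suc.prems] by (simp add: algebra_simps)
  also have "?c * (wt n (negm n a) * bs n a + wt n (negm n a) * (1 - bs n a) / 2) \<le> ?c * (3/4 * wt n (negm n a))"
  proof (intro mult_left_mono c0)
    have "bs n a * wt n (negm n a) \<le> (1/2) * wt n (negm n a)"
      using bs_le[of n a] wt_ge1[of n "negm n a"] by (intro mult_right_mono) auto
    moreover have "wt n (negm n a) * bs n a + wt n (negm n a) * (1 - bs n a) / 2
       = wt n (negm n a) / 2 + (bs n a * wt n (negm n a)) / 2" by (simp add: field_simps)
    ultimately show "wt n (negm n a) * bs n a + wt n (negm n a) * (1 - bs n a) / 2 \<le> 3/4 * wt n (negm n a)"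
      by linarith
  qed
  also have "\<dots> = (3/4)^(Suc s) * 2^(4*n) * wt n (negm n a)" by simp
  finally show ?case .
qed

lemma Xg2_sum: "n \<ge> 1 \<Longrightarrow> (\<Sum>k<2*n. Xg 2 n x s k) \<le> (3/4)^s"
proof (induction s)
  case 0 then show ?case by (simp add: sum.If_cases)
next
  case (Suc s)
  have "(\<Sum>k<2*n. Xg 2 n x (Suc s) k) = (\<Sum>k<2*n. Xg 2 n x s k * qs n k) + (\<Sum>k<2*n. Xg 2 n x s (prem n k) * (1 - qs n (prem n k)) / 2)"
    by (simp add: sum.distrib)
  also have "(\<Sum>k<2*n. Xg 2 n x s (prem n k) * (1 - qs n (prem n k)) / 2) = (\<Sum>k<2*n. Xg 2 n x s k * (1 - qs n k) / 2)"
    by (rule sum_prem)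
  also have "(\<Sum>k<2*n. Xg 2 n x s k * qs n k) + (\<Sum>k<2*n. Xg 2 n x s k * (1 - qs n k) / 2)
      = (\<Sum>k<2*n. Xg 2 n x s k * ((1 + qs n k)/2))"
    by (simp add: sum.distrib[symmetric] field_simps)
  also have "\<dots> \<le> (\<Sum>k<2*n. Xg 2 n x s k * (3/4))"
    using Xg_nonneg[of 2 n x s] by (intro sum_mono mult_left_mono) (auto simp: qs_def)
  also have "\<dots> = (3/4) * (\<Sum>k<2*n. Xg 2 n x s k)" by (simp add: sum_distrib_left mult.commute)
  also have "\<dots> \<le> (3/4)^(Suc s)" using Suc by simp
  finally show ?case .
qed



lemma delta_push:
  assumes "gk < 2*(n::nat)"
  shows "(\<Sum>k'<2*n. \<Sum>d'\<in>{1..4*n}. (if k' = gk \<and> d' + e = d then c else 0) * H k' d')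
        = (if e \<le> d \<and> d - e \<in> {1..4*n} then c * H gk (d - e) else (0::real))"
proof -
  have r: "\<And>k' d'. (if k' = gk \<and> d' + e = d then c else 0) * H k' d'
     = (if gk = k' then (if d - e = d' \<and> e \<le> d then c * H k' d' else 0) else 0)" by auto
  have "(\<Sum>k'<2*n. \<Sum>d'\<in>{1..4*n}. (if k' = gk \<and> d' + e = d then c else 0) * H k' d')
     = (\<Sum>k'<2*n. if gk = k' then (\<Sum>d'\<in>{1..4*n}. if d - e = d' \<and> e \<le> d then c * H k' d' else 0) else 0)"
    apply (simp only: r)
    apply (rule sum.cong[OF refl])
    subgoal for k by (cases "gk = k") simp_all
    done
  also have "\<dots> = (\<Sum>d'\<in>{1..4*n}. if d - e = d' \<and> e \<le> d then c * H gk d' else 0)"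
    using assms by simp
  also have "\<dots> = (\<Sum>d'\<in>{1..4*n}. if d - e = d' then (if e \<le> d then c * H gk d' else 0) else 0)"
    by (rule sum.cong) auto
  also have "\<dots> = (if d - e \<in> {1..4*n} then (if e \<le> d then c * H gk (d-e) else 0) else 0)"
    by (rule sum.delta'[OF finite_atLeastAtMost])
  finally show ?thesis by auto
qed

lemma amod_m1: "n \<ge> 1 \<Longrightarrow> d \<ge> 1 \<Longrightarrow> amod n k (d - 1) = prem n (amod n k d)"
proof -
  assume n: "n \<ge> 1" and d: "d \<ge> 1"
  have "amod n k d = sucm n (amod n k (d - 1))" using amod_1[OF n, of k "d-1"] d by simp
  then show ?thesis using amod_lt[OF n] by simp
qed

lemma amod_suc: "n \<ge> 1 \<Longrightarrow> k < 2*n \<Longrightarrow> d \<ge> 1 \<Longrightarrow> amod n (sucm n k) (d - 1) = amod n k d"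
  using amod_prem1[OF _ sucm_lt, of n k "d-1"] by simp

lemma amod_k1: "n \<ge> 1 \<Longrightarrow> k < 2*n \<Longrightarrow> amod n k 1 = sucm n k"
  using amod_1[of n k 0] by (simp add: amod_def)

locale hitctx =
  fixes n x z :: nat
  assumes n3: "n \<ge> 3" and xl: "x < 2*n" and zl: "z < 2*n"
begin

definition "TT = 8*n"
definition "hh s a = mpow (2*n) (Bm n) (TT - s) a z"
definition "alive s = (\<Sum>k<2*n. \<Sum>d\<in>{1..4*n}. Phi n x s k d * hh s (amod n k d))"
definition "A1 s k = qs n k * (1 - bs n (amod n k 1)) * hh (Suc s) (prem n (amod n k 1))
   + (1 - qs n k) * bs n (amod n k 1) * hh (Suc s) (amod n k 1)
   + (1 - qs n k) * (1 - bs n (amod n k 1)) * hh (Suc s) (prem n (amod n k 1))"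
definition "A2 s k = (1 - qs n k) * (1 - bs n (amod n k 2)) * hh (Suc s) (prem n (amod n k 2))"

lemma n1: "n \<ge> 1" using n3 by simp

lemma hh_nonneg: "a < 2*n \<Longrightarrow> 0 \<le> hh s a"
  unfolding hh_def using zl by (intro mpow_nonneg) (auto simp: Bm_nonneg)

lemma hh_step: "s < TT \<Longrightarrow> a < 2*n \<Longrightarrow> hh s a = bs n a * hh (Suc s) a + (1 - bs n a) * hh (Suc s) (prem n a)"
proof -
  assume s: "s < TT" and a: "a < 2*n"
  have "TT - s = Suc (TT - Suc s)" using s by simp
  then have "hh s a = (\<Sum>j<2*n. Bm n a j * hh (Suc s) j)"
    unfolding hh_def using mpow_Suc_left[OF a zl] by simp
  then show ?thesis using Bm_row[OF n1 a] by simp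
qed

lemma inner_eq:
  assumes k: "k < 2*n" and d: "d \<in> {1..4*n}"
  shows "(\<Sum>k'<2*n. \<Sum>d'\<in>{1..4*n}. Ptr n k d k' d' * hh (Suc s) (amod n k' d'))
     = bs n (amod n k d) * hh (Suc s) (amod n k d) + (1 - bs n (amod n k d)) * hh (Suc s) (prem n (amod n k d))
       - (if d = 1 then A1 s k else if d = 2 then A2 s k else 0)"
proof -
  let ?a = "amod n k d"
  let ?H = "\<lambda>k' d'. hh (Suc s) (amod n k' d')"
  have e: "\<And>k' d'. Ptr n k d k' d' * ?H k' d' =
       (if k' = k \<and> d' + 0 = d then qs n k * bs n ?a else 0) * ?H k' d'
     + (if k' = k \<and> d' + 1 = d then qs n k * (1 - bs n ?a) else 0) * ?H k' d'
     + (if k' = sucm n k \<and> d' + 1 = d then (1 - qs n k) * bs n ?a else 0) * ?H k' d'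
     + (if k' = sucm n k \<and> d' + 2 = d then (1 - qs n k) * (1 - bs n ?a) else 0) * ?H k' d'"
    by (simp add: Ptr_def distrib_right)
  have sk: "sucm n k < 2*n" using k by simp
  have "(\<Sum>k'<2*n. \<Sum>d'\<in>{1..4*n}. Ptr n k d k' d' * ?H k' d')
     = (if 0 \<le> d \<and> d - 0 \<in> {1..4*n} then qs n k * bs n ?a * ?H k (d - 0) else 0)
     + (if 1 \<le> d \<and> d - 1 \<in> {1..4*n} then qs n k * (1 - bs n ?a) * ?H k (d - 1) else 0)
     + (if 1 \<le> d \<and> d - 1 \<in> {1..4*n} then (1 - qs n k) * bs n ?a * ?H (sucm n k) (d - 1) else 0)
     + (if 2 \<le> d \<and> d - 2 \<in> {1..4*n} then (1 - qs n k) * (1 - bs n ?a) * ?H (sucm n k) (d - 2) else 0)"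
    by (simp only: e sum.distrib delta_push[OF k] delta_push[OF sk])
  also have "\<dots> = bs n ?a * hh (Suc s) ?a + (1 - bs n ?a) * hh (Suc s) (prem n ?a)
       - (if d = 1 then A1 s k else if d = 2 then A2 s k else 0)"
  proof -
    have d1: "d \<ge> 1" "d \<le> 4*n" using d by auto
    have m1: "d \<ge> 2 \<Longrightarrow> amod n k (d - 1) = prem n ?a" using amod_m1[OF n1] by simp
    have m2: "d \<ge> 2 \<Longrightarrow> amod n (sucm n k) (d - 1) = ?a" using amod_suc[OF n1 k] by simp
    have m3: "d \<ge> 3 \<Longrightarrow> amod n (sucm n k) (d - 2) = prem n ?a"
    proof -
      assume d3: "d \<ge> 3"
      have "amod n (sucm n k) ((d-1) - 1) = amod n k (d-1)" using amod_suc[OF n1 k, of "d-1"] d3 by simp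
      moreover have "(d-1)-1 = d-2" by simp
      moreover have "amod n k (d-1) = prem n ?a" using amod_m1[OF n1, of d k] d3 by simp
      ultimately show ?thesis by simp
    qed
    show ?thesis
    proof (cases "d = 1")
      case True
      then show ?thesis using n1 by (simp add: A1_def algebra_simps)
    next
      case False
      show ?thesis
      proof (cases "d = 2")
        case True
        then show ?thesis using d1 m1 m2 by (simp add: A2_def algebra_simps)
      next
        case False
        then have "d \<ge> 3" using \<open>d \<noteq> 1\<close> d1 by simp
        then have r: "1 \<le> d - 2" "d - 2 \<le> 4*n" "1 \<le> d - 1" "d - 1 \<le> 4*n" using d1 by auto
        show ?thesis using d1 m1 m2 m3 r \<open>d \<ge> 3\<close> \<open>d \<noteq> 1\<close> False by (simp add: algebra_simps)
      qed
    qed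
  qed
  finally show ?thesis .
qed

lemma conservation:
  assumes s: "s < TT"
  shows "alive s = alive (Suc s) + (\<Sum>k<2*n. Phi n x s k 1 * A1 s k + Phi n x s k 2 * A2 s k)"
proof -
  let ?R = "{1..4*n}"
  have "alive (Suc s) = (\<Sum>k'<2*n. \<Sum>d'\<in>?R. (\<Sum>k<2*n. \<Sum>d\<in>?R. Phi n x s k d * Ptr n k d k' d') * hh (Suc s) (amod n k' d'))"
    by (simp add: alive_def)
  also have "\<dots> = (\<Sum>k'<2*n. \<Sum>d'\<in>?R. \<Sum>k<2*n. \<Sum>d\<in>?R. Phi n x s k d * (Ptr n k d k' d' * hh (Suc s) (amod n k' d')))"
    by (simp add: sum_distrib_right mult.assoc)
  also have "\<dots> = (\<Sum>k<2*n. \<Sum>d\<in>?R. \<Sum>k'<2*n. \<Sum>d'\<in>?R. Phi n x s k d * (Ptr n k d k' d' * hh (Suc s) (amod n k' d')))"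
  proof -
    have "\<And>k'. (\<Sum>d'\<in>?R. \<Sum>k<2*n. \<Sum>d\<in>?R. Phi n x s k d * (Ptr n k d k' d' * hh (Suc s) (amod n k' d')))
       = (\<Sum>k<2*n. \<Sum>d\<in>?R. \<Sum>d'\<in>?R. Phi n x s k d * (Ptr n k d k' d' * hh (Suc s) (amod n k' d')))"
    proof -
      fix k'
      have "(\<Sum>d'\<in>?R. \<Sum>k<2*n. \<Sum>d\<in>?R. Phi n x s k d * (Ptr n k d k' d' * hh (Suc s) (amod n k' d')))
         = (\<Sum>k<2*n. \<Sum>d'\<in>?R. \<Sum>d\<in>?R. Phi n x s k d * (Ptr n k d k' d' * hh (Suc s) (amod n k' d')))"
        by (rule sum.swap)
      also have "\<dots> = (\<Sum>k<2*n. \<Sum>d\<in>?R. \<Sum>d'\<in>?R. Phi n x s k d * (Ptr n k d k' d' * hh (Suc s) (amod n k' d')))"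
        by (rule sum.cong[OF refl], rule sum.swap)
      finally show "?thesis k'" .
    qed
    then have "(\<Sum>k'<2*n. \<Sum>d'\<in>?R. \<Sum>k<2*n. \<Sum>d\<in>?R. Phi n x s k d * (Ptr n k d k' d' * hh (Suc s) (amod n k' d')))
      = (\<Sum>k'<2*n. \<Sum>k<2*n. \<Sum>d\<in>?R. \<Sum>d'\<in>?R. Phi n x s k d * (Ptr n k d k' d' * hh (Suc s) (amod n k' d')))"
      by simp
    also have "\<dots> = (\<Sum>k<2*n. \<Sum>k'<2*n. \<Sum>d\<in>?R. \<Sum>d'\<in>?R. Phi n x s k d * (Ptr n k d k' d' * hh (Suc s) (amod n k' d')))"
      by (rule sum.swap)
    also have "\<dots> = (\<Sum>k<2*n. \<Sum>d\<in>?R. \<Sum>k'<2*n. \<Sum>d'\<in>?R. Phi n x s k d * (Ptr n k d k' d' * hh (Suc s) (amod n k' d')))"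
      by (rule sum.cong[OF refl], rule sum.swap)
    finally show ?thesis .
  qed
  also have "\<dots> = (\<Sum>k<2*n. \<Sum>d\<in>?R. Phi n x s k d * (\<Sum>k'<2*n. \<Sum>d'\<in>?R. Ptr n k d k' d' * hh (Suc s) (amod n k' d')))"
    by (simp add: sum_distrib_left)
  also have "\<dots> = (\<Sum>k<2*n. \<Sum>d\<in>?R. Phi n x s k d * hh s (amod n k d)
        - Phi n x s k d * (if d = 1 then A1 s k else if d = 2 then A2 s k else 0))"
  proof (intro sum.cong refl)
    fix k d assume kk: "k \<in> {..<2*n}" and dd: "d \<in> ?R"
    have kk': "k < 2*n" using kk by simp
    show "Phi n x s k d * (\<Sum>k'<2*n. \<Sum>d'\<in>?R. Ptr n k d k' d' * hh (Suc s) (amod n k' d'))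
       = Phi n x s k d * hh s (amod n k d) - Phi n x s k d * (if d = 1 then A1 s k else if d = 2 then A2 s k else 0)"
      unfolding inner_eq[OF kk' dd] hh_step[OF s amod_lt[OF n1]] by (simp add: right_diff_distrib)
  qed
  also have "\<dots> = alive s - (\<Sum>k<2*n. \<Sum>d\<in>?R. Phi n x s k d * (if d = 1 then A1 s k else if d = 2 then A2 s k else 0))"
    by (simp add: alive_def sum_subtractf)
  also have "(\<Sum>k<2*n. \<Sum>d\<in>?R. Phi n x s k d * (if d = 1 then A1 s k else if d = 2 then A2 s k else 0))
      = (\<Sum>k<2*n. Phi n x s k 1 * A1 s k + Phi n x s k 2 * A2 s k)"
  proof (rule sum.cong[OF refl])
    fix k
    have "(\<Sum>d\<in>?R. Phi n x s k d * (if d = 1 then A1 s k else if d = 2 then A2 s k else 0))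
       = (\<Sum>d\<in>?R. (if 1 = d then Phi n x s k d * A1 s k else 0) + (if 2 = d then Phi n x s k d * A2 s k else 0))"
      by (rule sum.cong) auto
    also have "\<dots> = Phi n x s k 1 * A1 s k + Phi n x s k 2 * A2 s k"
      using n3 by (simp add: sum.distrib)
    finally show "(\<Sum>d\<in>?R. Phi n x s k d * (if d = 1 then A1 s k else if d = 2 then A2 s k else 0))
       = Phi n x s k 1 * A1 s k + Phi n x s k 2 * A2 s k" .
  qed
  finally show ?thesis by simp
qed

end


lemma special_cases: "n \<ge> 3 \<Longrightarrow> k < 2*n \<Longrightarrow> special n k \<Longrightarrow>
   \<not> special n (prem n k) \<or> (special n (prem n k) \<and> \<not> special n (prem n (prem n k)))"
  by (auto simp: special_def prem_def)

context hitctx begin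

lemma lemA:
  assumes k: "k < 2*n" and sk: "special n k" and npk: "\<not> special n (prem n k)"
    and d1: "1 \<le> d" and d2: "d \<le> 2*n"
  shows "Phi n x s k d \<le> Phi n x s (prem n k) (d+1)"
proof (cases s)
  case 0
  then show ?thesis using d2 Phi_nonneg[of n x 0 "prem n k" "d+1"] by simp
next
  case (Suc s')
  let ?pk = "prem n k"
  have pk: "?pk < 2*n" using k by simp
  have qk: "qs n k = 0" using sk by (simp add: qs_def)
  have qpk: "qs n ?pk = 1/2" using npk by (simp add: qs_def)
  have r: "d \<in> {1..4*n}" "d+1 \<in> {1..4*n}" "d+2 \<in> {1..4*n}" "d+1+1 \<in> {1..4*n}" using d1 d2 n3 by auto
  let ?T3 = "Phi n x s' ?pk (d+1) * ((1 - qs n ?pk) * bs n (amod n ?pk (d+1)))"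
  let ?T4 = "Phi n x s' ?pk (d+2) * ((1 - qs n ?pk) * (1 - bs n (amod n ?pk (d+2))))"
  have L: "Phi n x (Suc s') k d = ?T3 + ?T4"
    using Phi_pull[OF n1 k, of x s' d] r by (simp add: qk)
  let ?U3 = "Phi n x s' (prem n ?pk) (d+1+1) * ((1 - qs n (prem n ?pk)) * bs n (amod n (prem n ?pk) (d+1+1)))"
  let ?U4 = "Phi n x s' (prem n ?pk) (d+1+2) * ((1 - qs n (prem n ?pk)) * (1 - bs n (amod n (prem n ?pk) (d+1+2))))"
  have R: "Phi n x (Suc s') ?pk (d+1) = ?T3 + ?T4 + ?U3 + (if d+1+2 \<in> {1..4*n} then ?U4 else 0)"
    using Phi_pull[OF n1 pk, of x s' "d+1"] r by (simp add: qpk add.assoc)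
  have "0 \<le> ?U3" "0 \<le> ?U4"
    by (auto intro!: mult_nonneg_nonneg Phi_nonneg qs_le1 bs_le1 bs_nonneg)
  then show ?thesis using L R Suc by auto
qed

lemma lemB:
  assumes k: "k < 2*n" and sk: "special n k" and spk: "special n (prem n k)"
    and nppk: "\<not> special n (prem n (prem n k))"
  shows "Phi n x s k 1 \<le> 2 * Phi n x s (prem n k) 2"
proof (cases s)
  case 0
  then show ?thesis using Phi_nonneg[of n x 0 "prem n k" 2] n3 by simp
next
  case (Suc s')
  let ?pk = "prem n k" and ?ppk = "prem n (prem n k)"
  have pk: "?pk < 2*n" using k by simp
  have qk: "qs n k = 0" using sk by (simp add: qs_def)
  have qpk: "qs n ?pk = 0" using spk by (simp add: qs_def)
  have qppk: "qs n ?ppk = 1/2" using nppk by (simp add: qs_def)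
  have r: "1 \<in> {1..4*n}" "2 \<in> {1..4*n}" "3 \<in> {1..4*n}" "4 \<in> {1..4*n}" using n3 by auto
  have L: "Phi n x (Suc s') k 1 = Phi n x s' ?pk 2 * bs n (amod n ?pk 2) + Phi n x s' ?pk 3 * (1 - bs n (amod n ?pk 3))"
    using Phi_pull[OF n1 k, of x s' 1] r by (simp add: qk qpk numeral_3_eq_3 numeral_2_eq_2)
  have R: "Phi n x (Suc s') ?pk 2 = Phi n x s' ?ppk 3 * (1/2 * bs n (amod n ?ppk 3)) + Phi n x s' ?ppk 4 * (1/2 * (1 - bs n (amod n ?ppk 4)))"
    using Phi_pull[OF n1 pk, of x s' 2] r by (simp add: qpk qppk numeral_3_eq_3 numeral_2_eq_2 eval_nat_numeral)
  have a3: "amod n ?ppk 3 = amod n ?pk 2" using amod_prem1[OF n1 pk, of 2] by simp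
  have a4: "amod n ?ppk 4 = amod n ?pk 3" using amod_prem1[OF n1 pk, of 3] by simp
  have A2: "Phi n x s' ?pk 2 \<le> Phi n x s' ?ppk 3" using lemA[OF pk spk nppk, of 2 s'] n3 by simp
  have A3: "Phi n x s' ?pk 3 \<le> Phi n x s' ?ppk 4" using lemA[OF pk spk nppk, of 3 s'] n3 by simp
  have "Phi n x s' ?pk 2 * bs n (amod n ?pk 2) + Phi n x s' ?pk 3 * (1 - bs n (amod n ?pk 3))
     \<le> Phi n x s' ?ppk 3 * bs n (amod n ?pk 2) + Phi n x s' ?ppk 4 * (1 - bs n (amod n ?pk 3))"
    using A2 A3 by (intro add_mono mult_right_mono bs_nonneg bs_le1)
  then show ?thesis using L R a3 a4 Suc by (simp add: algebra_simps)
qed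

lemma KL: "k < 2*n \<Longrightarrow> Phi n x s k 1 * (1 - qs n k) \<le> 2 * (Phi n x s k 1 * qs n k + Phi n x s (prem n k) 2 * (1 - qs n (prem n k)))"
proof -
  assume k: "k < 2*n"
  have p0: "0 \<le> Phi n x s k 1" "0 \<le> Phi n x s (prem n k) 2" by (rule Phi_nonneg)+
  show ?thesis
  proof (cases "special n k")
    case False
    then show ?thesis using p0 qs_le1[of n "prem n k"] by (simp add: qs_def)
  next
    case True
    then have qk: "qs n k = 0" by (simp add: qs_def)
    from special_cases[OF n3 k True] show ?thesis
    proof
      assume np: "\<not> special n (prem n k)"
      then have qpk: "qs n (prem n k) = 1/2" by (simp add: qs_def)
      have "Phi n x s k 1 \<le> Phi n x s (prem n k) (1+1)" by (rule lemA[OF k True np]) (use n3 in auto)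
      then have h: "Phi n x s k 1 \<le> Phi n x s (prem n k) 2" by (simp add: numeral_2_eq_2)
      show ?thesis using h by (simp add: qk qpk)
    next
      assume h: "special n (prem n k) \<and> \<not> special n (prem n (prem n k))"
      then have "qs n (prem n k) = 0" by (simp add: qs_def)
      then show ?thesis using lemB[OF k True] h qk by simp
    qed
  qed
qed

definition "skipS s = (\<Sum>k<2*n. Phi n x s k 1 * ((1 - qs n k) * (1 - bs n (amod n k 1)) * hh (Suc s) (prem n (amod n k 1))))"
definition "hitS s = (\<Sum>k<2*n. Phi n x s k 1 * (qs n k * (1 - bs n (amod n k 1)) * hh (Suc s) (prem n (amod n k 1))
      + (1 - qs n k) * bs n (amod n k 1) * hh (Suc s) (amod n k 1)) + Phi n x s k 2 * A2 s k)"

lemma hit_skip_sum: "(\<Sum>k<2*n. Phi n x s k 1 * A1 s k + Phi n x s k 2 * A2 s k) = hitS s + skipS s"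
  by (simp add: hitS_def skipS_def A1_def sum.distrib[symmetric] algebra_simps)

lemma skip_le: "skipS s \<le> 2 * hitS s"
proof -
  let ?G = "\<lambda>k. (1 - bs n (amod n k 1)) * hh (Suc s) (prem n (amod n k 1))"
  have G0: "\<And>k. k < 2*n \<Longrightarrow> 0 \<le> ?G k"
    by (intro mult_nonneg_nonneg bs_le1 hh_nonneg prem_lt amod_lt[OF n1])
  have A2p: "\<And>k. k < 2*n \<Longrightarrow> A2 s (prem n k) = (1 - qs n (prem n k)) * ?G k"
  proof -
    fix k assume k: "k < 2*n"
    have e: "amod n (prem n k) 2 = amod n k 1" using amod_prem1[OF n1 k, of 1] by (simp add: numeral_2_eq_2)
    show "A2 s (prem n k) = (1 - qs n (prem n k)) * ?G k" unfolding A2_def e by (simp add: mult.assoc)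
  qed
  have "(\<Sum>k<2*n. Phi n x s k 2 * A2 s k) = (\<Sum>k<2*n. Phi n x s (prem n k) 2 * A2 s (prem n k))"
    by (rule sum_prem[symmetric])
  also have "\<dots> = (\<Sum>k<2*n. Phi n x s (prem n k) 2 * (1 - qs n (prem n k)) * ?G k)"
    by (intro sum.cong refl) (simp add: A2p mult.assoc)
  finally have e2: "(\<Sum>k<2*n. Phi n x s k 2 * A2 s k) = (\<Sum>k<2*n. Phi n x s (prem n k) 2 * (1 - qs n (prem n k)) * ?G k)" .
  have "hitS s \<ge> (\<Sum>k<2*n. Phi n x s k 1 * qs n k * ?G k) + (\<Sum>k<2*n. Phi n x s k 2 * A2 s k)"
  proof -
    have "\<And>k. k < 2*n \<Longrightarrow> Phi n x s k 1 * qs n k * ?G k \<le> Phi n x s k 1 * (qs n k * (1 - bs n (amod n k 1)) * hh (Suc s) (prem n (amod n k 1))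
      + (1 - qs n k) * bs n (amod n k 1) * hh (Suc s) (amod n k 1))"
    proof -
      fix k assume k: "k < 2*n"
      have "0 \<le> Phi n x s k 1 * ((1 - qs n k) * bs n (amod n k 1) * hh (Suc s) (amod n k 1))"
        by (intro mult_nonneg_nonneg Phi_nonneg qs_le1 bs_nonneg hh_nonneg amod_lt[OF n1])
      then show "?thesis k" by (simp add: algebra_simps)
    qed
    then have "(\<Sum>k<2*n. Phi n x s k 1 * qs n k * ?G k) \<le> (\<Sum>k<2*n. Phi n x s k 1 * (qs n k * (1 - bs n (amod n k 1)) * hh (Suc s) (prem n (amod n k 1))
      + (1 - qs n k) * bs n (amod n k 1) * hh (Suc s) (amod n k 1)))"
      by (intro sum_mono) auto
    then show ?thesis unfolding hitS_def by (simp add: sum.distrib)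
  qed
  then have H: "hitS s \<ge> (\<Sum>k<2*n. (Phi n x s k 1 * qs n k) * ?G k) + (\<Sum>k<2*n. (Phi n x s (prem n k) 2 * (1 - qs n (prem n k))) * ?G k)"
    using e2 by (simp add: mult.assoc)
  have eq: "(\<Sum>k<2*n. 2 * ((Phi n x s k 1 * qs n k) + (Phi n x s (prem n k) 2 * (1 - qs n (prem n k)))) * ?G k)
     = 2 * ((\<Sum>k<2*n. (Phi n x s k 1 * qs n k) * ?G k) + (\<Sum>k<2*n. (Phi n x s (prem n k) 2 * (1 - qs n (prem n k))) * ?G k))"
    by (simp only: sum.distrib[symmetric] sum_distrib_left) (rule sum.cong, auto simp: algebra_simps)
  have "2 * hitS s \<ge> (\<Sum>k<2*n. 2 * (Phi n x s k 1 * qs n k + Phi n x s (prem n k) 2 * (1 - qs n (prem n k))) * ?G k)"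
    unfolding eq using mult_left_mono[OF H, of 2] by simp
  moreover have "(\<Sum>k<2*n. 2 * (Phi n x s k 1 * qs n k + Phi n x s (prem n k) 2 * (1 - qs n (prem n k))) * ?G k)
     \<ge> (\<Sum>k<2*n. Phi n x s k 1 * (1 - qs n k) * ?G k)"
    using KL G0 by (intro sum_mono mult_right_mono) auto
  moreover have "(\<Sum>k<2*n. Phi n x s k 1 * (1 - qs n k) * ?G k) = skipS s"
    unfolding skipS_def by (simp add: mult.assoc)
  ultimately show ?thesis by linarith
qed

end


lemma pow_aux: "n \<ge> 3 \<Longrightarrow> 32 * real n \<le> 6 ^ n"
proof (induction n rule: nat_induct_at_least)
  case base then show ?case by simp
next
  case (Suc m)
  have "32 * real (Suc m) \<le> 6 * (32 * real m)" using Suc by simp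
  also have "\<dots> \<le> 6 * 6 ^ m" using Suc by simp
  finally show ?case by simp
qed

lemma bij_amod:
  assumes n: "n \<ge> 1" and x: "x < 2*n"
  shows "bij_betw (amod n x) {2*n+1..4*n} {..<2*n}"
proof -
  have inj: "inj_on (amod n x) {2*n+1..4*n}"
  proof (rule inj_onI)
    fix d1 d2 assume d1: "d1 \<in> {2*n+1..4*n}" and d2: "d2 \<in> {2*n+1..4*n}" and e: "amod n x d1 = amod n x d2"
    show "d1 = d2"
    proof (rule ccontr)
      assume ne: "d1 \<noteq> d2"
      { fix a b assume ab: "a \<in> {2*n+1..4*n}" "b \<in> {2*n+1..4*n}" "a < b" "(x + a) mod (2*n) = (x + b) mod (2*n)"
        then have "(2*n) dvd ((x+b) - (x+a))" using mod_eq_dvd_iff_nat[of "x+a" "x+b" "2*n"] by simp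
        moreover have "(x+b) - (x+a) < 2*n" "0 < (x+b) - (x+a)" using ab by auto
        ultimately have False using nat_dvd_not_less by blast }
      note H = this
      show False
      proof (cases "d1 < d2")
        case True then show False using H[of d1 d2] d1 d2 e by (auto simp: amod_def)
      next
        case False then have "d2 < d1" using ne by simp
        then show False using H[of d2 d1] d1 d2 e by (auto simp: amod_def)
      qed
    qed
  qed
  have sub: "amod n x ` {2*n+1..4*n} \<subseteq> {..<2*n}" using amod_lt[OF n] by auto
  have "card (amod n x ` {2*n+1..4*n}) = 2*n" using card_image[OF inj] by simp
  then have "amod n x ` {2*n+1..4*n} = {..<2*n}"
    using sub by (intro card_subset_eq) auto
  then show ?thesis using inj by (simp add: bij_betw_def)
qed

context hitctx begin

lemma Phi_le2: "k < 2*n \<Longrightarrow> Phi n x s k d \<le> 2 * mpow (2*n) (Qm n) s x k"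
proof -
  assume k: "k < 2*n"
  have "Phi n x s k d * 1 ^ d \<le> Xg 1 n x s k * Yg 1 n s (amod n k d)"
    by (rule prod_bound[OF _ n1 k]) simp
  also have "\<dots> \<le> mpow (2*n) (Qm n) s x k * 2"
  proof -
    have "Yg 1 n s (amod n k d) \<le> 2"
      using Yg1_le[OF n3 amod_lt[OF n1]] wt_le2 order.trans by blast
    moreover have "0 \<le> mpow (2*n) (Qm n) s x k" using k by (intro mpow_nonneg) (auto simp: Qm_nonneg)
    ultimately show ?thesis using Xg1_mpow[OF n1 k] by (simp add: mult_left_mono)
  qed
  finally show ?thesis by simp
qed

lemma hit_upper: "hitS s \<le> 4 * (\<Sum>j<2*n. mpow (2*n) (Qm n) (Suc s) x j * hh (Suc s) j)"
proof -
  let ?P = "\<lambda>k. mpow (2*n) (Qm n) s x k"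
  let ?h = "hh (Suc s)"
  have per: "\<And>k. k < 2*n \<Longrightarrow> Phi n x s k 1 * (qs n k * (1 - bs n (amod n k 1)) * ?h (prem n (amod n k 1))
      + (1 - qs n k) * bs n (amod n k 1) * ?h (amod n k 1)) + Phi n x s k 2 * A2 s k
      \<le> 4 * (?P k * (qs n k * ?h k + (1 - qs n k) * ?h (sucm n k)))"
  proof -
    fix k assume k: "k < 2*n"
    have a1: "amod n k 1 = sucm n k" using amod_k1[OF n1 k] .
    have a2: "prem n (amod n k 2) = sucm n k"
      using amod_m1[OF n1, of 2 k] a1 by simp
    have hk: "0 \<le> ?h k" "0 \<le> ?h (sucm n k)" using k by (auto intro!: hh_nonneg)
    have P0: "0 \<le> ?P k" using k by (intro mpow_nonneg) (auto simp: Qm_nonneg)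
    let ?S = "qs n k * ?h k + (1 - qs n k) * ?h (sucm n k)"
    have S0: "0 \<le> ?S" using hk by (intro add_nonneg_nonneg mult_nonneg_nonneg qs_nonneg qs_le1)
    have b1: "qs n k * (1 - bs n (sucm n k)) * ?h k + (1 - qs n k) * bs n (sucm n k) * ?h (sucm n k) \<le> ?S"
    proof -
      have "qs n k * (1 - bs n (sucm n k)) * ?h k \<le> qs n k * ?h k"
        using hk qs_nonneg[of n k] bs_nonneg[of n "sucm n k"] by (simp add: algebra_simps mult_nonneg_nonneg)
      moreover have "(1 - qs n k) * bs n (sucm n k) * ?h (sucm n k) \<le> (1 - qs n k) * ?h (sucm n k)"
        using hk qs_le1[of n k] bs_le[of n "sucm n k"] by (intro mult_right_mono) (auto intro: mult_left_le)
      ultimately show ?thesis by linarith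
    qed
    have b2: "(1 - qs n k) * (1 - bs n (amod n k 2)) * ?h (sucm n k) \<le> ?S"
    proof -
      have "(1 - qs n k) * (1 - bs n (amod n k 2)) * ?h (sucm n k) \<le> (1 - qs n k) * ?h (sucm n k)"
        using hk qs_le1[of n k] bs_nonneg[of n "amod n k 2"] by (intro mult_right_mono) (auto intro: mult_left_le)
      moreover have "0 \<le> qs n k * ?h k" using hk qs_nonneg[of n k] by simp
      ultimately show ?thesis by linarith
    qed
    have c1: "0 \<le> qs n k * (1 - bs n (sucm n k)) * ?h k + (1 - qs n k) * bs n (sucm n k) * ?h (sucm n k)"
      using hk by (intro add_nonneg_nonneg mult_nonneg_nonneg qs_nonneg qs_le1 bs_nonneg bs_le1)
    have c2: "0 \<le> (1 - qs n k) * (1 - bs n (amod n k 2)) * ?h (sucm n k)"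
      using hk by (intro mult_nonneg_nonneg qs_le1 bs_le1)
    have "Phi n x s k 1 * (qs n k * (1 - bs n (sucm n k)) * ?h k + (1 - qs n k) * bs n (sucm n k) * ?h (sucm n k))
        \<le> (2 * ?P k) * ?S"
      using b1 Phi_le2[OF k, of s 1] P0 c1 by (intro mult_mono) auto
    moreover have "Phi n x s k 2 * A2 s k \<le> (2 * ?P k) * ?S"
      unfolding A2_def a2 using b2 Phi_le2[OF k, of s 2] P0 c2 by (intro mult_mono) auto
    ultimately show "?thesis k" unfolding a1 using prem_sucm[OF k] by simp
  qed
  have "hitS s \<le> (\<Sum>k<2*n. 4 * (?P k * (qs n k * ?h k + (1 - qs n k) * ?h (sucm n k))))"
    unfolding hitS_def by (intro sum_mono per) auto
  also have "\<dots> = 4 * (\<Sum>k<2*n. ?P k * (\<Sum>j<2*n. Qm n k j * ?h j))"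
    by (simp add: sum_distrib_left Qm_row[OF n1])
  also have "(\<Sum>k<2*n. ?P k * (\<Sum>j<2*n. Qm n k j * ?h j)) = (\<Sum>j<2*n. mpow (2*n) (Qm n) (Suc s) x j * ?h j)"
  proof -
    have "(\<Sum>k<2*n. ?P k * (\<Sum>j<2*n. Qm n k j * ?h j)) = (\<Sum>k<2*n. \<Sum>j<2*n. ?P k * Qm n k j * ?h j)"
      by (simp add: sum_distrib_left mult.assoc)
    also have "\<dots> = (\<Sum>j<2*n. \<Sum>k<2*n. ?P k * Qm n k j * ?h j)" by (rule sum.swap)
    also have "\<dots> = (\<Sum>j<2*n. mpow (2*n) (Qm n) (Suc s) x j * ?h j)"
      by (simp add: sum_distrib_right)
    finally show ?thesis .
  qed
  finally show ?thesis .
qed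

lemma telescope: "m \<le> TT \<Longrightarrow> alive 0 = alive m + (\<Sum>s<m. hitS s + skipS s)"
proof (induction m)
  case 0 then show ?case by simp
next
  case (Suc m)
  then have "m < TT" by simp
  then show ?case using Suc conservation[of m] hit_skip_sum[of m] by simp
qed

lemma alive0: "alive 0 \<ge> 1/2"
proof -
  let ?R = "{1..4*n}" and ?W = "{2*n+1..4*n}"
  have "alive 0 = (\<Sum>k<2*n. if x = k then (\<Sum>d\<in>?R. if d \<in> ?W then hh 0 (amod n x d) else 0) else 0)"
    unfolding alive_def
    apply (rule sum.cong[OF refl])
    subgoal for k by (cases "x = k") (auto intro!: sum.cong)
    done
  also have "\<dots> = (\<Sum>d\<in>?R. (if d \<in> ?W then hh 0 (amod n x d) else 0))"
    by (subst sum.delta'[OF finite_lessThan], simp only: lessThan_iff xl if_True)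
  also have "\<dots> = (\<Sum>d\<in>?R \<inter> ?W. hh 0 (amod n x d))" by (rule sum.inter_restrict[symmetric]) simp
  also have "?R \<inter> ?W = ?W" by auto
  also have "(\<Sum>d\<in>?W. hh 0 (amod n x d)) = (\<Sum>u<2*n. hh 0 u)"
    by (rule sum.reindex_bij_betw[OF bij_amod[OF n1 xl]])
  finally have e: "alive 0 = (\<Sum>u<2*n. hh 0 u)" .
  have st: "(\<Sum>u<2*n. wt n (negm n u) * hh 0 u) = wt n (negm n z)"
    unfolding hh_def by (rule mpow_stat[OF wtB_stat[OF n3] zl])
  have "(\<Sum>u<2*n. wt n (negm n u) * hh 0 u) \<le> (\<Sum>u<2*n. 2 * hh 0 u)"
    using hh_nonneg wt_le2 by (intro sum_mono mult_right_mono) auto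
  then have "wt n (negm n z) \<le> 2 * (\<Sum>u<2*n. hh 0 u)" using st by (simp add: sum_distrib_left)
  then show ?thesis using e wt_ge1[of n "negm n z"] by simp
qed

lemma aliveT: "alive TT \<le> 1/8"
proof -
  let ?R = "{1..4*n}"
  let ?c = "(3/4::real)^TT * 2^(4*n) * 2"
  have hT: "\<And>a. hh TT a \<le> 1" unfolding hh_def by simp
  have b: "\<And>k d. k < 2*n \<Longrightarrow> d \<in> ?R \<Longrightarrow> Phi n x TT k d * hh TT (amod n k d) \<le> Xg 2 n x TT k * ?c / 2"
  proof -
    fix k d assume k: "k < 2*n" and d: "d \<in> ?R"
    have "Phi n x TT k d * hh TT (amod n k d) \<le> Phi n x TT k d"
      using hT[of "amod n k d"] Phi_nonneg[of n x TT k d] by (simp add: mult_left_le)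
    also have "\<dots> \<le> Phi n x TT k d * 2 ^ d / 2"
    proof -
      have "(2::real) \<le> 2 ^ d" using d by (simp add: self_le_power)
      then show ?thesis using Phi_nonneg[of n x TT k d] by (simp add: mult_left_mono[of 2 "2^d", simplified] le_divide_eq)
    qed
    also have "\<dots> \<le> Xg 2 n x TT k * Yg 2 n TT (amod n k d) / 2"
      using prod_bound[of 2 n k x TT d] n1 k by (intro divide_right_mono) auto
    also have "\<dots> \<le> Xg 2 n x TT k * ?c / 2"
    proof -
      have "Yg 2 n TT (amod n k d) \<le> (3/4)^TT * 2^(4*n) * wt n (negm n (amod n k d))"
        by (rule Yg2_le[OF n3 amod_lt[OF n1]])
      also have "\<dots> \<le> ?c" using wt_le2 by (intro mult_left_mono) auto
      finally show ?thesis using Xg_nonneg[of 2 n x TT k] by (intro divide_right_mono mult_left_mono) auto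
    qed
    finally show "Phi n x TT k d * hh TT (amod n k d) \<le> Xg 2 n x TT k * ?c / 2" .
  qed
  have "alive TT \<le> (\<Sum>k<2*n. \<Sum>d\<in>?R. Xg 2 n x TT k * ?c / 2)"
    unfolding alive_def using b by (intro sum_mono) auto
  also have "\<dots> = (\<Sum>k<2*n. Xg 2 n x TT k * (4 * real n * ?c / 2))"
    by (intro sum.cong refl) (simp add: mult_ac)
  also have "\<dots> = (\<Sum>k<2*n. Xg 2 n x TT k) * (4 * real n * ?c / 2)"
    by (rule sum_distrib_right[symmetric])
  also have "\<dots> \<le> (3/4)^TT * (4 * real n * ?c / 2)"
    using Xg2_sum[OF n1, of x TT] by (intro mult_right_mono) auto
  also have "\<dots> = 4 * real n * (((3/4::real)^16 * 16) ^ n)"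
  proof -
    have e1: "(3/4::real)^TT * (3/4)^TT = ((3/4)^16)^n" unfolding TT_def
      by (simp add: power_add[symmetric] power_mult[symmetric] mult.commute)
    have e2: "(2::real)^(4*n) = 16^n" by (simp add: power_mult)
    have "(3/4)^TT * (4 * real n * ?c / 2) = 4 * real n * (((3/4::real)^TT * (3/4)^TT) * 2^(4*n))"
      by (simp add: algebra_simps)
    also have "\<dots> = 4 * real n * (((3/4::real)^16)^n * 16^n)" by (simp only: e1 e2)
    also have "\<dots> = 4 * real n * (((3/4::real)^16 * 16) ^ n)" by (simp add: power_mult_distrib)
    finally show ?thesis .
  qed
  also have "\<dots> \<le> 4 * real n * ((1/6) ^ n)"
  proof -
    have "(3/4::real)^16 * 16 \<le> 1/6" by (simp add: power_divide)
    then show ?thesis by (intro mult_left_mono power_mono) auto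
  qed
  also have "\<dots> \<le> 1/8"
  proof -
    have "32 * real n \<le> 6 ^ n" by (rule pow_aux[OF n3])
    then show ?thesis by (simp add: power_one_over field_simps)
  qed
  finally show ?thesis .
qed

theorem HIT: "(\<Sum>s<TT. \<Sum>j<2*n. mpow (2*n) (Qm n) (Suc s) x j * mpow (2*n) (Bm n) (TT - Suc s) j z) \<ge> 1/32"
proof -
  have t: "alive 0 = alive TT + (\<Sum>s<TT. hitS s + skipS s)" by (rule telescope) simp
  have "(\<Sum>s<TT. hitS s + skipS s) \<le> (\<Sum>s<TT. 12 * (\<Sum>j<2*n. mpow (2*n) (Qm n) (Suc s) x j * hh (Suc s) j))"
  proof (rule sum_mono)
    fix s
    show "hitS s + skipS s \<le> 12 * (\<Sum>j<2*n. mpow (2*n) (Qm n) (Suc s) x j * hh (Suc s) j)"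
      using skip_le[of s] hit_upper[of s] by linarith
  qed
  then have "1/2 \<le> 1/8 + 12 * (\<Sum>s<TT. \<Sum>j<2*n. mpow (2*n) (Qm n) (Suc s) x j * hh (Suc s) j)"
    using t alive0 aliveT by (simp add: sum_distrib_left)
  then show ?thesis by (simp add: hh_def)
qed

end


definition onerefl :: "nat \<Rightarrow> (nat \<Rightarrow> nat \<Rightarrow> real) \<Rightarrow> (nat \<Rightarrow> nat \<Rightarrow> real) \<Rightarrow> nat \<Rightarrow> nat \<Rightarrow> nat \<Rightarrow> real" where
  "onerefl N L R t i k = (\<Sum>s\<le>t. \<Sum>j<N. mpow N L s i j * (\<Sum>l<N. R j l * mpow N L (t - s) l k))"

lemma onerefl_step:
  assumes k: "k < N"
  shows "(\<Sum>k'<N. onerefl N L R t i k' * L k' k) + (\<Sum>k'<N. mpow N L (Suc t) i k' * R k' k) = onerefl N L R (Suc t) i k"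
proof -
  have A: "(\<Sum>k'<N. onerefl N L R t i k' * L k' k) = (\<Sum>s\<le>t. \<Sum>j<N. mpow N L s i j * (\<Sum>l<N. R j l * mpow N L (Suc t - s) l k))"
  proof -
    have "(\<Sum>k'<N. onerefl N L R t i k' * L k' k)
        = (\<Sum>k'<N. \<Sum>s\<le>t. \<Sum>j<N. \<Sum>l<N. mpow N L s i j * R j l * (mpow N L (t - s) l k' * L k' k))"
      unfolding onerefl_def by (simp only: sum_distrib_right sum_distrib_left mult.assoc)
    also have "\<dots> = (\<Sum>s\<le>t. \<Sum>j<N. \<Sum>l<N. \<Sum>k'<N. mpow N L s i j * R j l * (mpow N L (t - s) l k' * L k' k))"
    proof -
      have "(\<Sum>k'<N. \<Sum>s\<le>t. \<Sum>j<N. \<Sum>l<N. mpow N L s i j * R j l * (mpow N L (t - s) l k' * L k' k))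
          = (\<Sum>s\<le>t. \<Sum>k'<N. \<Sum>j<N. \<Sum>l<N. mpow N L s i j * R j l * (mpow N L (t - s) l k' * L k' k))"
        by (rule sum.swap)
      also have "\<dots> = (\<Sum>s\<le>t. \<Sum>j<N. \<Sum>k'<N. \<Sum>l<N. mpow N L s i j * R j l * (mpow N L (t - s) l k' * L k' k))"
        by (rule sum.cong[OF refl], rule sum.swap)
      also have "\<dots> = (\<Sum>s\<le>t. \<Sum>j<N. \<Sum>l<N. \<Sum>k'<N. mpow N L s i j * R j l * (mpow N L (t - s) l k' * L k' k))"
        by (rule sum.cong[OF refl], rule sum.cong[OF refl], rule sum.swap)
      finally show ?thesis .
    qed
    also have "\<dots> = (\<Sum>s\<le>t. \<Sum>j<N. \<Sum>l<N. mpow N L s i j * R j l * mpow N L (Suc (t - s)) l k)"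
      by (simp add: sum_distrib_left)
    also have "\<dots> = (\<Sum>s\<le>t. \<Sum>j<N. mpow N L s i j * (\<Sum>l<N. R j l * mpow N L (Suc t - s) l k))"
      by (intro sum.cong refl) (simp add: sum_distrib_left mult.assoc Suc_diff_le)
    finally show ?thesis .
  qed
  have B: "(\<Sum>k'<N. mpow N L (Suc t) i k' * R k' k) = (\<Sum>j<N. mpow N L (Suc t) i j * (\<Sum>l<N. R j l * mpow N L (Suc t - Suc t) l k))"
    using k by (simp add: sum_delta_lt')
  show ?thesis unfolding A B by (simp add: onerefl_def atMost_Suc)
qed

lemma onerefl_le:
  assumes L0: "\<And>i j. i < N \<Longrightarrow> j < N \<Longrightarrow> 0 \<le> L i j" and R0: "\<And>i j. i < N \<Longrightarrow> j < N \<Longrightarrow> 0 \<le> R i j"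
    and KLR: "\<And>i j. i < N \<Longrightarrow> j < N \<Longrightarrow> L i j + R i j \<le> KK i j"
  shows "k < N \<Longrightarrow> onerefl N L R t i k \<le> mpow N KK (Suc t) i k"
proof (induction t arbitrary: k)
  case 0
  have RK: "\<And>i j. i < N \<Longrightarrow> j < N \<Longrightarrow> R i j \<le> KK i j"
  proof -
    fix i j assume "i < N" "j < N"
    then show "R i j \<le> KK i j" using L0[of i j] KLR[of i j] by linarith
  qed
  have "onerefl N L R 0 i k = (\<Sum>j<N. (if i = j then 1 else 0) * R j k)"
    unfolding onerefl_def using 0 by (simp add: sum_delta_lt')
  also have "\<dots> \<le> (\<Sum>j<N. (if i = j then 1 else 0) * KK j k)"
    using RK 0 by (intro sum_mono mult_left_mono) auto
  also have "\<dots> = mpow N KK 1 i k" by simp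
  finally show ?case by simp
next
  case (Suc t)
  have K0: "\<And>i j. i < N \<Longrightarrow> j < N \<Longrightarrow> 0 \<le> KK i j" using L0 R0 KLR by (meson add_nonneg_nonneg order.trans)
  have LK: "\<And>i j. i < N \<Longrightarrow> j < N \<Longrightarrow> L i j \<le> KK i j"
  proof -
    fix i j assume "i < N" "j < N"
    then show "L i j \<le> KK i j" using R0[of i j] KLR[of i j] by linarith
  qed
  have "onerefl N L R (Suc t) i k = (\<Sum>k'<N. onerefl N L R t i k' * L k' k + mpow N L (Suc t) i k' * R k' k)"
    using onerefl_step[OF Suc.prems] by (simp add: sum.distrib)
  also have "\<dots> \<le> (\<Sum>k'<N. mpow N KK (Suc t) i k' * (L k' k + R k' k))"
  proof (rule sum_mono)
    fix k' assume k': "k' \<in> {..<N}"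
    have "onerefl N L R t i k' * L k' k \<le> mpow N KK (Suc t) i k' * L k' k"
      using Suc.IH[of k'] k' L0 Suc.prems by (intro mult_right_mono) auto
    moreover have "mpow N L (Suc t) i k' * R k' k \<le> mpow N KK (Suc t) i k' * R k' k"
    proof -
      have "mpow N L (Suc t) i k' \<le> mpow N KK (Suc t) i k'"
        by (rule mpow_mono[of N L KK, OF L0 LK]) (use k' in auto)
      then show ?thesis using k' R0 Suc.prems by (intro mult_right_mono) auto
    qed
    ultimately show "onerefl N L R t i k' * L k' k + mpow N L (Suc t) i k' * R k' k \<le> mpow N KK (Suc t) i k' * (L k' k + R k' k)"
      by (simp add: distrib_left)
  qed
  also have "\<dots> \<le> (\<Sum>k'<N. mpow N KK (Suc t) i k' * KK k' k)"
  proof (rule sum_mono)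
    fix k' assume k': "k' \<in> {..<N}"
    have "0 \<le> mpow N KK (Suc t) i k'" by (rule mpow_nonneg[OF K0]) (use k' in auto)
    then show "mpow N KK (Suc t) i k' * (L k' k + R k' k) \<le> mpow N KK (Suc t) i k' * KK k' k"
      using KLR[of k' k] k' Suc.prems by (intro mult_left_mono) auto
  qed
  also have "\<dots> = mpow N KK (Suc (Suc t)) i k" by simp
  finally show ?case .
qed

lemma doeblin:
  assumes P0: "\<And>i j. i < N \<Longrightarrow> j < N \<Longrightarrow> \<beta> \<le> P i j" and Ps: "\<And>i. i < N \<Longrightarrow> (\<Sum>j<N. P i j) = 1"
    and f0: "(\<Sum>i<N. f i) = 0"
  shows "(\<Sum>j<N. \<bar>\<Sum>i<N. f i * P i j\<bar>) \<le> (1 - real N * \<beta>) * (\<Sum>i<N. \<bar>f i\<bar>)"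
proof -
  have "\<And>j. j < N \<Longrightarrow> (\<Sum>i<N. f i * P i j) = (\<Sum>i<N. f i * (P i j - \<beta>))"
    using f0 by (simp add: right_diff_distrib sum_subtractf sum_distrib_right[symmetric])
  then have "(\<Sum>j<N. \<bar>\<Sum>i<N. f i * P i j\<bar>) = (\<Sum>j<N. \<bar>\<Sum>i<N. f i * (P i j - \<beta>)\<bar>)" by simp
  also have "\<dots> \<le> (\<Sum>j<N. \<Sum>i<N. \<bar>f i\<bar> * (P i j - \<beta>))"
  proof (rule sum_mono)
    fix j assume j: "j \<in> {..<N}"
    have "\<bar>\<Sum>i<N. f i * (P i j - \<beta>)\<bar> \<le> (\<Sum>i<N. \<bar>f i * (P i j - \<beta>)\<bar>)" by (rule sum_abs)
    also have "\<dots> = (\<Sum>i<N. \<bar>f i\<bar> * (P i j - \<beta>))"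
      using P0 j by (intro sum.cong refl) (simp add: abs_mult)
    finally show "\<bar>\<Sum>i<N. f i * (P i j - \<beta>)\<bar> \<le> (\<Sum>i<N. \<bar>f i\<bar> * (P i j - \<beta>))" .
  qed
  also have "\<dots> = (\<Sum>i<N. \<Sum>j<N. \<bar>f i\<bar> * (P i j - \<beta>))" by (rule sum.swap)
  also have "\<dots> = (\<Sum>i<N. \<bar>f i\<bar> * (1 - real N * \<beta>))"
    using Ps by (simp add: sum_distrib_left[symmetric] sum_subtractf)
  also have "\<dots> = (1 - real N * \<beta>) * (\<Sum>i<N. \<bar>f i\<bar>)" by (simp add: sum_distrib_left mult.commute)
  finally show ?thesis .
qed

lemma nonexp:
  fixes P :: "nat \<Rightarrow> nat \<Rightarrow> real"
  assumes P0: "\<And>i j. i < (N::nat) \<Longrightarrow> j < N \<Longrightarrow> 0 \<le> P i j" and Ps: "\<And>i. i < N \<Longrightarrow> (\<Sum>j<N. P i j) = 1"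
  shows "(\<Sum>j<N. \<bar>\<Sum>i<N. f i * P i j\<bar>) \<le> (\<Sum>i<N. \<bar>f i\<bar>)"
proof -
  have "(\<Sum>j<N. \<bar>\<Sum>i<N. f i * P i j\<bar>) \<le> (\<Sum>j<N. \<Sum>i<N. \<bar>f i\<bar> * P i j)"
  proof (rule sum_mono)
    fix j assume j: "j \<in> {..<N}"
    have "\<bar>\<Sum>i<N. f i * P i j\<bar> \<le> (\<Sum>i<N. \<bar>f i * P i j\<bar>)" by (rule sum_abs)
    also have "\<dots> = (\<Sum>i<N. \<bar>f i\<bar> * P i j)" using P0 j by (intro sum.cong refl) (simp add: abs_mult)
    finally show "\<bar>\<Sum>i<N. f i * P i j\<bar> \<le> (\<Sum>i<N. \<bar>f i\<bar> * P i j)" .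
  qed
  also have "\<dots> = (\<Sum>i<N. \<Sum>j<N. \<bar>f i\<bar> * P i j)" by (rule sum.swap)
  also have "\<dots> = (\<Sum>i<N. \<bar>f i\<bar>)" using Ps by (simp add: sum_distrib_left[symmetric])
  finally show ?thesis .
qed

definition Dist :: "nat \<Rightarrow> (nat \<Rightarrow> nat \<Rightarrow> real) \<Rightarrow> (nat \<Rightarrow> real) \<Rightarrow> nat \<Rightarrow> nat \<Rightarrow> real" where
  "Dist N KK p i t = (\<Sum>j<N. \<bar>mpow N KK t i j - p j\<bar>)"

lemma Dist_shift:
  assumes ps: "\<And>k. k < N \<Longrightarrow> (\<Sum>i<N. p i * KK i k) = p k" and j: "j < N"
  shows "mpow N KK (t + m) i j - p j = (\<Sum>l<N. (mpow N KK t i l - p l) * mpow N KK m l j)"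
proof -
  have "(\<Sum>l<N. (mpow N KK t i l - p l) * mpow N KK m l j) = mpow N KK (t+m) i j - (\<Sum>l<N. p l * mpow N KK m l j)"
    using mpow_add[OF j] by (simp add: left_diff_distrib sum_subtractf)
  also have "(\<Sum>l<N. p l * mpow N KK m l j) = p j" by (rule mpow_stat[OF ps j])
  finally show ?thesis by simp
qed

lemma Dist_bound:
  assumes K0: "\<And>i j. i < N \<Longrightarrow> j < N \<Longrightarrow> 0 \<le> KK i j" and Ks: "\<And>i. i < N \<Longrightarrow> (\<Sum>j<N. KK i j) = 1"
    and ps: "\<And>k. k < N \<Longrightarrow> (\<Sum>i<N. p i * KK i k) = p k" and p1: "(\<Sum>i<N. p i) = 1"
    and pnn: "\<And>j. 0 \<le> p j"
    and i: "i < N" and beta: "\<And>a b. a < N \<Longrightarrow> b < N \<Longrightarrow> \<beta> \<le> mpow N KK M a b" and b0: "0 \<le> real N * \<beta>"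
  shows "Dist N KK p i t \<le> 2 * (1 - real N * \<beta>) ^ (t div M)"
proof -
  have P0: "\<And>a b. a < N \<Longrightarrow> b < N \<Longrightarrow> 0 \<le> mpow N KK m a b" for m using mpow_nonneg[of N KK, OF K0] by blast
  have Ps: "\<And>a. a < N \<Longrightarrow> (\<Sum>b<N. mpow N KK m a b) = 1" for m using mpow_stoch[of N KK, OF K0 Ks] by blast
  have sh: "Dist N KK p i (t + m) = (\<Sum>j<N. \<bar>\<Sum>l<N. (mpow N KK t i l - p l) * mpow N KK m l j\<bar>)" for t m
    unfolding Dist_def using Dist_shift[OF ps, of _ t m i] by (intro sum.cong refl) auto
  have f0: "(\<Sum>l<N. mpow N KK t i l - p l) = 0" for t using Ps[OF i, of t] p1 by (simp add: sum_subtractf)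
  have mono: "Dist N KK p i (t + m) \<le> Dist N KK p i t" for t m
    unfolding sh using nonexp[of N "mpow N KK m", OF P0 Ps] by (simp add: Dist_def)
  have contr: "Dist N KK p i (t + M) \<le> (1 - real N * \<beta>) * Dist N KK p i t" for t
    unfolding sh using doeblin[of N \<beta> "mpow N KK M", OF beta Ps f0] by (simp add: Dist_def)
  have D0: "Dist N KK p i 0 \<le> 2"
  proof -
    have "Dist N KK p i 0 \<le> (\<Sum>j<N. \<bar>mpow N KK 0 i j\<bar> + \<bar>p j\<bar>)" unfolding Dist_def by (intro sum_mono abs_triangle_ineq4)
    also have "\<dots> = 1 + 1" using i p1 pnn by (simp add: sum.distrib)
    finally show ?thesis by simp
  qed
  have c0: "0 \<le> 1 - real N * \<beta>"
  proof -
    have "real N * \<beta> \<le> (\<Sum>b<N. mpow N KK M i b)"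
    proof -
      have "(\<Sum>b<N. \<beta>) \<le> (\<Sum>b<N. mpow N KK M i b)" using beta i by (intro sum_mono) auto
      then show ?thesis by simp
    qed
    then show ?thesis using Ps[OF i] by simp
  qed
  have "Dist N KK p i (q * M) \<le> 2 * (1 - real N * \<beta>) ^ q" for q
  proof (induction q)
    case 0 then show ?case using D0 by simp
  next
    case (Suc q)
    have "Dist N KK p i (Suc q * M) = Dist N KK p i (q * M + M)" by (simp add: add.commute)
    also have "\<dots> \<le> (1 - real N * \<beta>) * Dist N KK p i (q * M)" by (rule contr)
    also have "\<dots> \<le> (1 - real N * \<beta>) * (2 * (1 - real N * \<beta>) ^ q)" using Suc c0 by (intro mult_left_mono)
    finally show ?case by (simp add: algebra_simps)
  qed
  moreover have "Dist N KK p i t \<le> Dist N KK p i ((t div M) * M)"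
  proof -
    have "t = (t div M) * M + t mod M" by simp
    then show ?thesis using mono[of "(t div M) * M" "t mod M"] by simp
  qed
  ultimately show ?thesis by (meson order.trans)
qed



declare mpow.simps(2)[simp del]

definition rr :: "nat \<Rightarrow> nat \<Rightarrow> nat \<Rightarrow> real" where
  "rr n U j = (if special n j then 1 / real U else 1 / (2 * real U))"
definition Lc :: "nat \<Rightarrow> nat \<Rightarrow> nat \<Rightarrow> nat \<Rightarrow> real" where
  "Lc n U j j' = (if j' = j then qs n j else 0) + (if j' = sucm n j then (1 - 1 / real U) * (1 - qs n j) else 0)"
definition Rc :: "nat \<Rightarrow> nat \<Rightarrow> nat \<Rightarrow> nat \<Rightarrow> real" where
  "Rc n U j j' = (if j' = negm n j then rr n U j else 0)"
definition Kc :: "nat \<Rightarrow> nat \<Rightarrow> nat \<Rightarrow> nat \<Rightarrow> real" where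
  "Kc n U j j' = Lc n U j j' + Rc n U j j'"
definition pic :: "nat \<Rightarrow> nat \<Rightarrow> real" where
  "pic n j = wt n j / (4 * (real n - 1))"

context
  fixes n U :: nat
  assumes n3: "n \<ge> 3" and U3: "U \<ge> 3"
begin

lemma n1': "n \<ge> 1" using n3 by simp

lemma Uinv: "0 < 1 / real U" "1 / real U \<le> 1/3" using U3 by auto

lemma rr_nonneg: "0 \<le> rr n U j" by (simp add: rr_def)
lemma Lc_nonneg: "0 \<le> Lc n U j j'"
  using Uinv qs_le1[of n j] qs_nonneg[of n j] by (auto simp: Lc_def intro!: mult_nonneg_nonneg)
lemma Rc_nonneg: "0 \<le> Rc n U j j'" using rr_nonneg by (simp add: Rc_def)
lemma Kc_nonneg: "0 \<le> Kc n U j j'" using Lc_nonneg Rc_nonneg by (simp add: Kc_def)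

lemma sum_ind: "a < 2*n \<Longrightarrow> (\<Sum>j'<2*n. (if j' = a then c else 0)) = (c::real)"
  by (simp add: sum.delta')

lemma Kc_stoch: "j < 2*n \<Longrightarrow> (\<Sum>j'<2*n. Kc n U j j') = 1"
proof -
  assume j: "j < 2*n"
  have "(\<Sum>j'<2*n. Kc n U j j') = qs n j + (1 - 1 / real U) * (1 - qs n j) + rr n U j"
    unfolding Kc_def Lc_def Rc_def using j by (simp add: sum.distrib sum_ind)
  also have "\<dots> = 1" by (auto simp: qs_def rr_def field_simps)
  finally show ?thesis .
qed

lemma Lc_ge: "(1 - 1 / real U) * Qm n j j' \<le> Lc n U j j'"
proof -
  have a: "(1 - 1 / real U) * qs n j \<le> qs n j" using Uinv qs_nonneg[of n j] by (simp add: mult_left_le_one_le)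
  have "(1 - 1 / real U) * Qm n j j' = (if j' = j then (1 - 1 / real U) * qs n j else 0) + (if j' = sucm n j then (1 - 1 / real U) * (1 - qs n j) else 0)"
    by (simp add: Qm_def distrib_left)
  also have "\<dots> \<le> Lc n U j j'" unfolding Lc_def using a by (intro add_mono) auto
  finally show ?thesis .
qed

lemma negm_eq_iff: "a < 2*n \<Longrightarrow> b < 2*n \<Longrightarrow> (b = negm n a) = (a = negm n b)"
  by (metis negm_negm)

lemma Kc_stat: "k < 2*n \<Longrightarrow> (\<Sum>i<2*n. wt n i * Kc n U i k) = wt n k"
proof -
  assume k: "k < 2*n"
  have L: "(\<Sum>i<2*n. wt n i * Lc n U i k) = wt n k * qs n k + wt n (prem n k) * ((1 - 1/real U) * (1 - qs n (prem n k)))"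
  proof -
    have "(\<Sum>i<2*n. wt n i * Lc n U i k) = (\<Sum>i<2*n. (if k = i then wt n i * qs n i else 0) + (if prem n k = i then wt n i * ((1 - 1/real U) * (1 - qs n i)) else 0))"
      using k prem_neq[OF n1' k] by (intro sum.cong) (auto simp: Lc_def sucm_eq_iff)
    also have "\<dots> = wt n k * qs n k + wt n (prem n k) * ((1 - 1/real U) * (1 - qs n (prem n k)))" using k by (simp add: sum.distrib)
    finally show ?thesis .
  qed
  have R: "(\<Sum>i<2*n. wt n i * Rc n U i k) = wt n (negm n k) * rr n U (negm n k)"
  proof -
    have "(\<Sum>i<2*n. wt n i * Rc n U i k) = (\<Sum>i<2*n. if negm n k = i then wt n i * rr n U i else 0)"
      using k by (intro sum.cong refl) (auto simp: Rc_def negm_eq_iff)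
    also have "\<dots> = wt n (negm n k) * rr n U (negm n k)" using k by simp
    finally show ?thesis .
  qed
  have w1: "wt n (negm n k) * rr n U (negm n k) = 1 / real U" by (auto simp: wt_def rr_def)
  have w2: "wt n (prem n k) * (1 - qs n (prem n k)) = 1" by (auto simp: wt_def qs_def)
  have w3: "wt n (prem n k) * ((1 - 1/real U) * (1 - qs n (prem n k))) = 1 - 1/real U"
    by (auto simp: wt_def qs_def)
  have "(\<Sum>i<2*n. wt n i * Kc n U i k) = wt n k * qs n k + wt n (prem n k) * (1 - qs n (prem n k))"
    unfolding Kc_def distrib_left sum.distrib L R w1 w3 w2 by simp
  also have "\<dots> = wt n k" using wt_stat_step[OF n3 k] .
  finally show ?thesis .
qed

lemma wt_sum: "(\<Sum>j<2*n. wt n j) = 4 * real n - 4"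
proof -
  have "(\<Sum>j<2*n. wt n j) = (\<Sum>j<2*n. 2 - (if j \<in> {0,1,n,n+1} then 1 else 0))"
    by (intro sum.cong) (auto simp: wt_def special_def)
  also have "\<dots> = 4 * real n - (\<Sum>j<2*n. if j \<in> {0,1,n,n+1} then 1 else 0)"
    by (simp add: sum_subtractf)
  also have "(\<Sum>j<2*n. if j \<in> {0,1,n,n+1} then 1 else (0::real)) = (\<Sum>j\<in>{..<2*n} \<inter> {0,1,n,n+1}. 1)"
    by (rule sum.inter_restrict[symmetric]) simp
  also have "{..<2*n} \<inter> {0,1,n,n+1} = {0,1,n,n+1}" using n3 by auto
  also have "(\<Sum>j\<in>{0,1,n,n+1}. (1::real)) = 4" using n3 by simp
  finally show ?thesis by simp
qed

lemma pic_stat: "k < 2*n \<Longrightarrow> (\<Sum>i<2*n. pic n i * Kc n U i k) = pic n k"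
  using Kc_stat by (simp add: pic_def sum_divide_distrib[symmetric] mult.commute)

lemma pic_sum: "(\<Sum>j<2*n. pic n j) = 1"
  using wt_sum n3 by (simp add: pic_def sum_divide_distrib[symmetric])

lemma pic_nonneg: "0 \<le> pic n j" using n3 wt_ge1[of n j] by (simp add: pic_def)

lemma Kc_lower:
  assumes i: "i < 2*n" and k: "k < 2*n"
  shows "(1 - 1 / real U) ^ (8*n) / (64 * real U) \<le> mpow (2*n) (Kc n U) (Suc (8*n)) i k"
proof -
  let ?T = "8*n" and ?\<theta> = "1 - 1 / real U"
  have th0: "0 \<le> ?\<theta>" using Uinv by simp
  have hc: "hitctx n i (negm n k)" using n3 i k by unfold_locales auto
  have H: "(\<Sum>s<?T. \<Sum>j<2*n. mpow (2*n) (Qm n) (Suc s) i j * mpow (2*n) (Bm n) (?T - Suc s) j (negm n k)) \<ge> 1/32"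
    using hitctx.HIT[OF hc] by (simp add: hitctx.TT_def[OF hc])
  have conj: "\<And>j m. j < 2*n \<Longrightarrow> mpow (2*n) (Bm n) m j (negm n k) = mpow (2*n) (Qm n) m (negm n j) k"
    using mpow_conj[OF bij_negm, where B="Bm n" and A="Qm n"] Bm_Qm k by simp
  have Lmono: "\<And>s a b. b < 2*n \<Longrightarrow> ?\<theta> ^ s * mpow (2*n) (Qm n) s a b \<le> mpow (2*n) (Lc n U) s a b"
  proof -
    fix s a b assume b: "b < 2*n"
    have "mpow (2*n) (\<lambda>i j. ?\<theta> * Qm n i j) s a b \<le> mpow (2*n) (Lc n U) s a b"
      by (rule mpow_mono) (use b th0 Lc_ge in \<open>auto intro: mult_nonneg_nonneg Qm_nonneg\<close>)
    then show "?\<theta> ^ s * mpow (2*n) (Qm n) s a b \<le> mpow (2*n) (Lc n U) s a b" by (simp add: mpow_scale)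
  qed
  have S6: "onerefl (2*n) (Lc n U) (Rc n U) ?T i k \<le> mpow (2*n) (Kc n U) (Suc ?T) i k"
    by (rule onerefl_le) (auto simp: Lc_nonneg Rc_nonneg Kc_def k)
  have S1: "onerefl (2*n) (Lc n U) (Rc n U) ?T i k = (\<Sum>s\<le>?T. \<Sum>j<2*n. mpow (2*n) (Lc n U) s i j * (rr n U j * mpow (2*n) (Lc n U) (?T - s) (negm n j) k))"
  proof -
    have inner: "\<And>s j. j < 2*n \<Longrightarrow> (\<Sum>l<2*n. Rc n U j l * mpow (2*n) (Lc n U) (?T - s) l k) = rr n U j * mpow (2*n) (Lc n U) (?T - s) (negm n j) k"
    proof -
      fix s j assume j: "j < 2*n"
      have "(\<Sum>l<2*n. Rc n U j l * mpow (2*n) (Lc n U) (?T - s) l k) = (\<Sum>l<2*n. if negm n j = l then rr n U j * mpow (2*n) (Lc n U) (?T - s) l k else 0)"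
        by (intro sum.cong) (auto simp: Rc_def)
      also have "\<dots> = rr n U j * mpow (2*n) (Lc n U) (?T - s) (negm n j) k" using j by simp
      finally show "(\<Sum>l<2*n. Rc n U j l * mpow (2*n) (Lc n U) (?T - s) l k) = rr n U j * mpow (2*n) (Lc n U) (?T - s) (negm n j) k" .
    qed
    show ?thesis unfolding onerefl_def by (intro sum.cong refl) (simp add: inner)
  qed
  have S2: "(\<Sum>s\<le>?T. \<Sum>j<2*n. (?\<theta>^?T / (2 * real U)) * (mpow (2*n) (Qm n) s i j * mpow (2*n) (Qm n) (?T - s) (negm n j) k))
     \<le> (\<Sum>s\<le>?T. \<Sum>j<2*n. mpow (2*n) (Lc n U) s i j * (rr n U j * mpow (2*n) (Lc n U) (?T - s) (negm n j) k))"
  proof (intro sum_mono)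
    fix s j assume s: "s \<in> {..?T}" and j: "j \<in> {..<2*n}"
    have q0: "0 \<le> mpow (2*n) (Qm n) s i j" "0 \<le> mpow (2*n) (Qm n) (?T - s) (negm n j) k"
      using j k by (auto intro!: mpow_nonneg simp: Qm_nonneg)
    have r: "1 / (2 * real U) \<le> rr n U j" using U3 by (simp add: rr_def frac_le)
    have L0: "0 \<le> mpow (2*n) (Lc n U) s i j" using j by (intro mpow_nonneg) (auto simp: Lc_nonneg)
    have pw: "?\<theta>^?T = ?\<theta>^s * ?\<theta>^(?T - s)" using s by (simp add: power_add[symmetric])
    have "(?\<theta>^?T / (2 * real U)) * (mpow (2*n) (Qm n) s i j * mpow (2*n) (Qm n) (?T - s) (negm n j) k)
       = (?\<theta>^s * mpow (2*n) (Qm n) s i j) * ((1 / (2 * real U)) * (?\<theta>^(?T - s) * mpow (2*n) (Qm n) (?T - s) (negm n j) k))"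
      unfolding pw by (simp only: divide_inverse mult_1 mult_ac)
    also have "\<dots> \<le> mpow (2*n) (Lc n U) s i j * (rr n U j * mpow (2*n) (Lc n U) (?T - s) (negm n j) k)"
    proof -
      have p1: "0 \<le> ?\<theta>^(?T - s) * mpow (2*n) (Qm n) (?T - s) (negm n j) k" using th0 q0 by simp
      have p2: "0 \<le> ?\<theta>^s * mpow (2*n) (Qm n) s i j" using th0 q0 by simp
      have i1: "(1 / (2 * real U)) * (?\<theta>^(?T - s) * mpow (2*n) (Qm n) (?T - s) (negm n j) k)
          \<le> rr n U j * mpow (2*n) (Lc n U) (?T - s) (negm n j) k"
        by (rule mult_mono[OF r Lmono[OF k] rr_nonneg p1])
      have p3: "0 \<le> (1 / (2 * real U)) * (?\<theta>^(?T - s) * mpow (2*n) (Qm n) (?T - s) (negm n j) k)"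
        using p1 by simp
      show ?thesis by (rule mult_mono[OF Lmono[OF j[simplified]] i1 L0 p3])
    qed
    finally show "(?\<theta>^?T / (2 * real U)) * (mpow (2*n) (Qm n) s i j * mpow (2*n) (Qm n) (?T - s) (negm n j) k)
       \<le> mpow (2*n) (Lc n U) s i j * (rr n U j * mpow (2*n) (Lc n U) (?T - s) (negm n j) k)" .
  qed
  have S3: "(\<Sum>s\<le>?T. \<Sum>j<2*n. (?\<theta>^?T / (2 * real U)) * (mpow (2*n) (Qm n) s i j * mpow (2*n) (Qm n) (?T - s) (negm n j) k))
      = (?\<theta>^?T / (2 * real U)) * (\<Sum>s<Suc ?T. \<Sum>j<2*n. mpow (2*n) (Qm n) s i j * mpow (2*n) (Qm n) (?T - s) (negm n j) k)"
    by (simp add: sum_distrib_left lessThan_Suc_atMost)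
  have S4: "(\<Sum>s<Suc ?T. \<Sum>j<2*n. mpow (2*n) (Qm n) s i j * mpow (2*n) (Qm n) (?T - s) (negm n j) k)
      = (\<Sum>j<2*n. mpow (2*n) (Qm n) 0 i j * mpow (2*n) (Qm n) ?T (negm n j) k)
        + (\<Sum>s<?T. \<Sum>j<2*n. mpow (2*n) (Qm n) (Suc s) i j * mpow (2*n) (Qm n) (?T - Suc s) (negm n j) k)"
    by (simp only: sum.lessThan_Suc_shift diff_zero)
  have S5: "(\<Sum>s<?T. \<Sum>j<2*n. mpow (2*n) (Qm n) (Suc s) i j * mpow (2*n) (Qm n) (?T - Suc s) (negm n j) k)
      = (\<Sum>s<?T. \<Sum>j<2*n. mpow (2*n) (Qm n) (Suc s) i j * mpow (2*n) (Bm n) (?T - Suc s) j (negm n k))"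
    using conj by (intro sum.cong refl) auto
  have A0: "0 \<le> (\<Sum>j<2*n. mpow (2*n) (Qm n) 0 i j * mpow (2*n) (Qm n) ?T (negm n j) k)"
    using k by (intro sum_nonneg mult_nonneg_nonneg mpow_nonneg) (auto simp: Qm_nonneg)
  have c0: "0 \<le> ?\<theta>^?T / (2 * real U)" using th0 by simp
  let ?c = "?\<theta>^?T / (2 * real U)"
  let ?A = "(\<Sum>j<2*n. mpow (2*n) (Qm n) 0 i j * mpow (2*n) (Qm n) ?T (negm n j) k)"
  let ?B = "(\<Sum>s<?T. \<Sum>j<2*n. mpow (2*n) (Qm n) (Suc s) i j * mpow (2*n) (Bm n) (?T - Suc s) j (negm n k))"
  have "?c * (1/32) \<le> ?c * (?A + ?B)" using H A0 c0 by (intro mult_left_mono) auto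
  also have "?c * (?A + ?B) = ?c * (\<Sum>s<Suc ?T. \<Sum>j<2*n. mpow (2*n) (Qm n) s i j * mpow (2*n) (Qm n) (?T - s) (negm n j) k)"
    by (simp only: S4 S5)
  also have "\<dots> = (\<Sum>s\<le>?T. \<Sum>j<2*n. ?c * (mpow (2*n) (Qm n) s i j * mpow (2*n) (Qm n) (?T - s) (negm n j) k))"
    by (rule S3[symmetric])
  also have "\<dots> \<le> (\<Sum>s\<le>?T. \<Sum>j<2*n. mpow (2*n) (Lc n U) s i j * (rr n U j * mpow (2*n) (Lc n U) (?T - s) (negm n j) k))"
    by (rule S2)
  also have "\<dots> = onerefl (2*n) (Lc n U) (Rc n U) ?T i k" by (rule S1[symmetric])
  also have "\<dots> \<le> mpow (2*n) (Kc n U) (Suc ?T) i k" by (rule S6)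
  finally have "?c * (1/32) \<le> mpow (2*n) (Kc n U) (Suc ?T) i k" .
  then show ?thesis by simp
qed

end


declare mpow.simps(2)[simp del]

definition cyc :: "nat \<Rightarrow> nat \<times> bool \<Rightarrow> nat" where
  "cyc n x = (if snd x then (if fst x = 1 then 0 else 2*n+1 - fst x) else fst x)"
definition decyc :: "nat \<Rightarrow> nat \<Rightarrow> nat \<times> bool" where
  "decyc n j = (if j = 0 then (1, True) else if j \<le> n then (j, False) else (2*n+1-j, True))"

lemma bij_cyc: "n \<ge> 1 \<Longrightarrow> bij_betw (cyc n) (states n) {..<2*n}"
  by (rule bij_betw_byWitness[where f'="decyc n"]) (auto simp: cyc_def decyc_def states_def)

lemma cyc_inj: "n \<ge> 1 \<Longrightarrow> x \<in> states n \<Longrightarrow> y \<in> states n \<Longrightarrow> (cyc n x = cyc n y) = (x = y)"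
  using bij_cyc by (metis bij_betw_def inj_on_eq_iff)

lemma Kc_gen:
  assumes n: "n \<ge> 1" and y: "y \<in> states n" and y123: "y1 \<in> states n" "y2 \<in> states n" "y3 \<in> states n"
    and c1: "j = cyc n y1" and c2: "sucm n j = cyc n y2" and c3: "negm n j = cyc n y3"
  shows "Kc n U j (cyc n y) = (if y = y1 then qs n j else 0) + (if y = y2 then (1 - 1/real U) * (1 - qs n j) else 0)
       + (if y = y3 then rr n U j else 0)"
proof -
  have e1: "(cyc n y = j) = (y = y1)" using c1 cyc_inj[OF n y y123(1)] by simp
  have e2: "(cyc n y = sucm n j) = (y = y2)" using c2 cyc_inj[OF n y y123(2)] by simp
  have e3: "(cyc n y = negm n j) = (y = y3)" using c3 cyc_inj[OF n y y123(3)] by simp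
  show ?thesis unfolding Kc_def Lc_def Rc_def e1 e2 e3 ..
qed

lemma K_cyc:
  assumes n: "n \<ge> 3" and x: "x \<in> states n" and y: "y \<in> states n"
  shows "K n U x y = Kc n U (cyc n x) (cyc n y)"
proof -
  obtain i b where xi: "x = (i, b)" by (cases x)
  have i: "1 \<le> i" "i \<le> n" using x xi by (auto simp: states_def)
  have n1: "n \<ge> 1" using n by simp
  have yst: "fst y \<in> {1..n}" using y by (auto simp: states_def)
  have yne: "y \<in> states n" by (rule y)
  let ?u = "real U"
  show ?thesis
  proof (cases b)
    case False
    show ?thesis
    proof (cases "i = 1")
      case True
      have "Kc n U (cyc n x) (cyc n y) = (if y = (1,False) then 0 else 0) + (if y = (2,False) then (1 - 1/?u) * (1 - 0) else 0)
         + (if y = (2,True) then 1/?u else 0)"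
        using Kc_gen[OF n1 y, of "(1,False)" "(2,False)" "(2,True)" "cyc n x" U] n xi False True
        by (simp add: states_def cyc_def sucm_def negm_def qs_def special_def rr_def)
      moreover have "K n U x y = (if y = (2, False) then 1 - 1/?u else if y = (2, True) then 1/?u else 0)"
        using x y xi False True by (simp add: K_def Let_def)
      ultimately show ?thesis by auto
    next
      case i1: False
      show ?thesis
      proof (cases "i = n")
        case True
        have "Kc n U (cyc n x) (cyc n y) = (if y = (n,False) then 0 else 0) + (if y = (n,True) then (1 - 1/?u) * (1 - 0) else 0)
           + (if y = (n,False) then 1/?u else 0)"
          using Kc_gen[OF n1 y, of "(n,False)" "(n,True)" "(n,False)" "cyc n x" U] n xi False True
          by (simp add: states_def cyc_def sucm_def negm_def qs_def special_def rr_def)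
        moreover have "K n U x y = (if y = (n, True) then 1 - 1/?u else if y = (n, False) then 1/?u else 0)"
          using x y xi False True i1 by (simp add: K_def Let_def)
        ultimately show ?thesis by auto
      next
        case i2: False
        have "Kc n U (cyc n x) (cyc n y) = (if y = (i,False) then 1/2 else 0) + (if y = (i+1,False) then (1 - 1/?u) * (1 - 1/2) else 0)
           + (if y = (i+1,True) then 1/(2*?u) else 0)"
          using Kc_gen[OF n1 y, of "(i,False)" "(i+1,False)" "(i+1,True)" "cyc n x" U] n xi False i i1 i2
          by (simp add: states_def cyc_def sucm_def negm_def qs_def special_def rr_def)
        moreover have "K n U x y = (if y = (i, False) then 1/2 else if y = (i+1, False) then (1/2) * (1 - 1/?u)
              else if y = (i+1, True) then 1/(2*?u) else 0)"
          using x y xi False i1 i2 by (simp add: K_def Let_def)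
        ultimately show ?thesis by auto
      qed
    qed
  next
    case True
    show ?thesis
    proof (cases "i = 1")
      case i1: True
      have "Kc n U (cyc n x) (cyc n y) = (if y = (1,True) then 0 else 0) + (if y = (1,False) then (1 - 1/?u) * (1 - 0) else 0)
         + (if y = (1,True) then 1/?u else 0)"
        using Kc_gen[OF n1 y, of "(1,True)" "(1,False)" "(1,True)" "cyc n x" U] n xi True i1
        by (simp add: states_def cyc_def sucm_def negm_def qs_def special_def rr_def)
      moreover have "K n U x y = (if y = (1, False) then 1 - 1/?u else if y = (1, True) then 1/?u else 0)"
        using x y xi True i1 by (simp add: K_def Let_def)
      ultimately show ?thesis by auto
    next
      case i1: False
      show ?thesis
      proof (cases "i = n")
        case i2: True
        have "Kc n U (cyc n x) (cyc n y) = (if y = (n,True) then 0 else 0) + (if y = (n-1,True) then (1 - 1/?u) * (1 - 0) else 0)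
           + (if y = (n-1,False) then 1/?u else 0)"
          using Kc_gen[OF n1 y, of "(n,True)" "(n-1,True)" "(n-1,False)" "cyc n x" U] n xi True i1 i2
          by (simp add: states_def cyc_def sucm_def negm_def qs_def special_def rr_def)
        moreover have "K n U x y = (if y = (n-1, True) then 1 - 1/?u else if y = (n-1, False) then 1/?u else 0)"
          using x y xi True i1 i2 by (simp add: K_def Let_def)
        moreover have "(n-1, True) \<noteq> (n-1, False)" by simp
        ultimately show ?thesis by auto
      next
        case i2: False
        have "Kc n U (cyc n x) (cyc n y) = (if y = (i,True) then 1/2 else 0) + (if y = (i-1,True) then (1 - 1/?u) * (1 - 1/2) else 0)
           + (if y = (i-1,False) then 1/(2*?u) else 0)"
        proof -
          have cx: "cyc n x = 2*n+1-i" using xi True i1 by (simp add: cyc_def)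
          have c1: "cyc n x = cyc n (i,True)" using xi True by simp
          have c2: "sucm n (cyc n x) = cyc n (i-1,True)"
            using cx i i1 i2 n by (cases "i = 2") (auto simp: sucm_def cyc_def)
          have c3: "negm n (cyc n x) = cyc n (i-1,False)"
            using cx i i1 i2 n by (auto simp: negm_def cyc_def)
          have ns: "\<not> special n (cyc n x)" using cx i i1 i2 n by (auto simp: special_def)
          have st: "(i,True) \<in> states n" "(i-1,True) \<in> states n" "(i-1,False) \<in> states n"
            using i i1 by (auto simp: states_def)
          show ?thesis using Kc_gen[OF n1 y st c1 c2 c3, of U] ns by (simp add: qs_def rr_def)
        qed
        moreover have "K n U x y = (if y = (i, True) then 1/2 else if y = (i-1, True) then (1/2) * (1 - 1/?u)
              else if y = (i-1, False) then 1/(2*?u) else 0)"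
          using x y xi True i1 i2 by (simp add: K_def Let_def)
        moreover have "i - 1 \<noteq> i" using i i1 by simp
        ultimately show ?thesis by auto
      qed
    qed
  qed
qed


lemma finite_states: "finite (states n)" by (simp add: states_def)

lemma Kpow_cyc:
  assumes n: "n \<ge> 3" and x: "x \<in> states n"
  shows "y \<in> states n \<Longrightarrow> Kpow n U t x y = mpow (2*n) (Kc n U) t (cyc n x) (cyc n y)"
proof (induction t arbitrary: y)
  case 0
  then show ?case using cyc_inj[of n x y] x n by simp
next
  case (Suc t)
  have n1: "n \<ge> 1" using n by simp
  have "Kpow n U (Suc t) x y = (\<Sum>z\<in>states n. mpow (2*n) (Kc n U) t (cyc n x) (cyc n z) * Kc n U (cyc n z) (cyc n y))"
    using Suc K_cyc[OF n _ Suc.prems] by simp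
  also have "\<dots> = (\<Sum>j<2*n. mpow (2*n) (Kc n U) t (cyc n x) j * Kc n U j (cyc n y))"
    by (rule sum.reindex_bij_betw[OF bij_cyc[OF n1]])
  also have "\<dots> = mpow (2*n) (Kc n U) (Suc t) (cyc n x) (cyc n y)" by (simp add: mpow.simps(2))
  finally show ?case .
qed

definition pis :: "nat \<Rightarrow> nat \<times> bool \<Rightarrow> real" where
  "pis n y = (if y \<in> states n then pic n (cyc n y) else 0)"

lemma cyc_lt: "x \<in> states n \<Longrightarrow> cyc n x < 2*n"
  by (auto simp: cyc_def states_def)

context
  fixes n U :: nat
  assumes n3: "n \<ge> 3" and U3: "U \<ge> 3"
begin

lemma nn1: "n \<ge> 1" using n3 by simp

definition "beta = (1 - 1 / real U) ^ (8*n) / (64 * real U)"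

lemma beta_nonneg: "0 \<le> beta" using U3 by (simp add: beta_def)

lemma Dist_states:
  assumes x: "x \<in> states n"
  shows "(\<Sum>y\<in>states n. \<bar>Kpow n U t x y - pis n y\<bar>) = Dist (2*n) (Kc n U) (pic n) (cyc n x) t"
proof -
  have "(\<Sum>y\<in>states n. \<bar>Kpow n U t x y - pis n y\<bar>) = (\<Sum>y\<in>states n. \<bar>mpow (2*n) (Kc n U) t (cyc n x) (cyc n y) - pic n (cyc n y)\<bar>)"
    using Kpow_cyc[OF n3 x] by (intro sum.cong refl) (simp add: pis_def)
  also have "\<dots> = (\<Sum>j<2*n. \<bar>mpow (2*n) (Kc n U) t (cyc n x) j - pic n j\<bar>)"
    by (rule sum.reindex_bij_betw[OF bij_cyc[OF nn1]])
  finally show ?thesis by (simp add: Dist_def)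
qed

lemma Dist_le:
  assumes i: "i < 2*n"
  shows "Dist (2*n) (Kc n U) (pic n) i t \<le> 2 * (1 - real (2*n) * beta) ^ (t div Suc (8*n))"
proof (rule Dist_bound)
  show "\<And>i j. i < 2*n \<Longrightarrow> j < 2*n \<Longrightarrow> 0 \<le> Kc n U i j" using Kc_nonneg[OF n3 U3] by blast
  show "\<And>i. i < 2*n \<Longrightarrow> (\<Sum>j<2*n. Kc n U i j) = 1" using Kc_stoch[OF n3 U3] by blast
  show "\<And>k. k < 2*n \<Longrightarrow> (\<Sum>i<2*n. pic n i * Kc n U i k) = pic n k" using pic_stat[OF n3 U3] by blast
  show "(\<Sum>i<2*n. pic n i) = 1" using pic_sum[OF n3 U3] .
  show "\<And>j. 0 \<le> pic n j" using pic_nonneg[OF n3 U3] by blast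
  show "i < 2*n" by (rule i)
  show "\<And>a b. a < 2*n \<Longrightarrow> b < 2*n \<Longrightarrow> beta \<le> mpow (2*n) (Kc n U) (Suc (8*n)) a b"
    unfolding beta_def using Kc_lower[OF n3 U3] by blast
  show "0 \<le> real (2*n) * beta" using beta_nonneg by simp
qed

lemma gamma_bounds: "0 \<le> 1 - real (2*n) * beta" "real (2*n) * beta > 0"
proof -
  have "real (2*n) * beta \<le> (\<Sum>b<2*n. mpow (2*n) (Kc n U) (Suc (8*n)) 0 b)"
  proof -
    have "(\<Sum>b<2*n. beta) \<le> (\<Sum>b<2*n. mpow (2*n) (Kc n U) (Suc (8*n)) 0 b)"
      using Kc_lower[OF n3 U3, of 0] n3 unfolding beta_def by (intro sum_mono) auto
    then show ?thesis by simp
  qed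
  also have "\<dots> = 1" using mpow_stoch[of "2*n" "Kc n U", OF _ Kc_stoch[OF n3 U3]] Kc_nonneg[OF n3 U3] n3 by auto
  finally show "0 \<le> 1 - real (2*n) * beta" by simp
  show "real (2*n) * beta > 0" using n3 U3 unfolding beta_def by simp
qed

lemma stat_pis: "stat n U = pis n"
proof -
  let ?g = "1 - real (2*n) * beta"
  have stat_ok: "is_stationary n U (pis n)"
    unfolding is_stationary_def
  proof (intro conjI ballI allI impI)
    fix x assume "x \<in> states n" then show "0 \<le> pis n x" using pic_nonneg[OF n3 U3] by (simp add: pis_def)
  next
    fix x assume "x \<notin> states n" then show "pis n x = 0" by (simp add: pis_def)
  next
    have "(\<Sum>x\<in>states n. pis n x) = (\<Sum>x\<in>states n. pic n (cyc n x))" by (intro sum.cong) (auto simp: pis_def)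
    also have "\<dots> = (\<Sum>j<2*n. pic n j)" by (rule sum.reindex_bij_betw[OF bij_cyc[OF nn1]])
    finally show "(\<Sum>x\<in>states n. pis n x) = 1" using pic_sum[OF n3 U3] by simp
  next
    fix y assume y: "y \<in> states n"
    have "(\<Sum>x\<in>states n. pis n x * K n U x y) = (\<Sum>x\<in>states n. pic n (cyc n x) * Kc n U (cyc n x) (cyc n y))"
      using y K_cyc[OF n3 _ y] by (intro sum.cong) (auto simp: pis_def)
    also have "\<dots> = (\<Sum>j<2*n. pic n j * Kc n U j (cyc n y))" by (rule sum.reindex_bij_betw[OF bij_cyc[OF nn1]])
    also have "\<dots> = pic n (cyc n y)" by (rule pic_stat[OF n3 U3 cyc_lt[OF y]])
    finally show "(\<Sum>x\<in>states n. pis n x * K n U x y) = pis n y" using y by (simp add: pis_def)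
  qed
  have uniq: "p = pis n" if ps: "is_stationary n U p" for p
  proof -
    have p0: "\<And>x. x \<in> states n \<Longrightarrow> 0 \<le> p x" and pout: "\<And>x. x \<notin> states n \<Longrightarrow> p x = 0"
      and p1: "(\<Sum>x\<in>states n. p x) = 1" and pst: "\<And>y. y \<in> states n \<Longrightarrow> (\<Sum>x\<in>states n. p x * K n U x y) = p y"
      using ps unfolding is_stationary_def by auto
    have P: "\<And>y. y \<in> states n \<Longrightarrow> (\<Sum>x\<in>states n. p x * Kpow n U t x y) = p y" for t
    proof (induction t)
      case 0
      then show ?case by (simp add: if_distrib[of "\<lambda>z. p _ * z"] finite_states cong: if_cong)
    next
      case (Suc t)
      have "(\<Sum>x\<in>states n. p x * Kpow n U (Suc t) x y) = (\<Sum>x\<in>states n. \<Sum>z\<in>states n. p x * Kpow n U t x z * K n U z y)"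
        by (simp add: sum_distrib_left mult.assoc)
      also have "\<dots> = (\<Sum>z\<in>states n. \<Sum>x\<in>states n. p x * Kpow n U t x z * K n U z y)" by (rule sum.swap)
      also have "\<dots> = (\<Sum>z\<in>states n. p z * K n U z y)"
        using Suc.IH by (simp add: sum_distrib_right[symmetric])
      also have "\<dots> = p y" using pst Suc.prems by simp
      finally show ?case .
    qed
    have bound: "(\<Sum>y\<in>states n. \<bar>p y - pis n y\<bar>) \<le> 2 * ?g ^ q" for q
    proof -
      let ?t = "q * Suc (8*n)"
      have "(\<Sum>y\<in>states n. \<bar>p y - pis n y\<bar>) = (\<Sum>y\<in>states n. \<bar>\<Sum>x\<in>states n. p x * (Kpow n U ?t x y - pis n y)\<bar>)"
      proof (intro sum.cong refl)
        fix y assume y: "y \<in> states n"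
        have "(\<Sum>x\<in>states n. p x * (Kpow n U ?t x y - pis n y)) = p y - pis n y"
          using P[OF y, of ?t] p1 by (simp add: right_diff_distrib sum_subtractf sum_distrib_right[symmetric])
        then show "\<bar>p y - pis n y\<bar> = \<bar>\<Sum>x\<in>states n. p x * (Kpow n U ?t x y - pis n y)\<bar>" by simp
      qed
      also have "\<dots> \<le> (\<Sum>y\<in>states n. \<Sum>x\<in>states n. p x * \<bar>Kpow n U ?t x y - pis n y\<bar>)"
      proof (rule sum_mono)
        fix y
        have "\<bar>\<Sum>x\<in>states n. p x * (Kpow n U ?t x y - pis n y)\<bar> \<le> (\<Sum>x\<in>states n. \<bar>p x * (Kpow n U ?t x y - pis n y)\<bar>)"
          by (rule sum_abs)
        also have "\<dots> = (\<Sum>x\<in>states n. p x * \<bar>Kpow n U ?t x y - pis n y\<bar>)"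
          using p0 by (intro sum.cong refl) (simp add: abs_mult)
        finally show "\<bar>\<Sum>x\<in>states n. p x * (Kpow n U ?t x y - pis n y)\<bar> \<le> (\<Sum>x\<in>states n. p x * \<bar>Kpow n U ?t x y - pis n y\<bar>)" .
      qed
      also have "\<dots> = (\<Sum>x\<in>states n. p x * (\<Sum>y\<in>states n. \<bar>Kpow n U ?t x y - pis n y\<bar>))"
        by (subst sum.swap) (simp add: sum_distrib_left)
      also have "\<dots> \<le> (\<Sum>x\<in>states n. p x * (2 * ?g ^ q))"
      proof (rule sum_mono)
        fix x assume x: "x \<in> states n"
        have "(\<Sum>y\<in>states n. \<bar>Kpow n U ?t x y - pis n y\<bar>) \<le> 2 * ?g ^ (?t div Suc (8*n))"
          unfolding Dist_states[OF x] by (rule Dist_le[OF cyc_lt[OF x]])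
        moreover have qq: "?t div Suc (8*n) = q" by (metis nonzero_mult_div_cancel_right Suc_neq_Zero)
        ultimately have "(\<Sum>y\<in>states n. \<bar>Kpow n U ?t x y - pis n y\<bar>) \<le> 2 * ?g ^ q" by simp
        then show "p x * (\<Sum>y\<in>states n. \<bar>Kpow n U ?t x y - pis n y\<bar>) \<le> p x * (2 * ?g ^ q)"
          using p0[OF x] by (intro mult_left_mono) auto
      qed
      also have "\<dots> = 2 * ?g ^ q" using p1 by (simp add: sum_distrib_right[symmetric])
      finally show ?thesis .
    qed
    have g1: "?g < 1" "0 \<le> ?g" using gamma_bounds by auto
    have zero: "(\<Sum>y\<in>states n. \<bar>p y - pis n y\<bar>) \<le> 0"
    proof (rule ccontr)
      assume "\<not> ?thesis"
      then have pos: "(\<Sum>y\<in>states n. \<bar>p y - pis n y\<bar>) / 2 > 0" by simp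
      obtain q where "?g ^ q < (\<Sum>y\<in>states n. \<bar>p y - pis n y\<bar>) / 2"
        using real_arch_pow_inv[OF pos g1(1)] by blast
      then show False using bound[of q] by simp
    qed
    have "\<forall>y\<in>states n. \<bar>p y - pis n y\<bar> = 0"
    proof -
      have "(\<Sum>y\<in>states n. \<bar>p y - pis n y\<bar>) = 0"
        using zero by (simp add: order_antisym sum_nonneg)
      then show ?thesis using sum_nonneg_eq_0_iff[OF finite_states[of n], where f="\<lambda>y. \<bar>p y - pis n y\<bar>"] by simp
    qed
    then show "p = pis n"
      using pout by (intro ext) (auto simp: pis_def)
  qed
  show ?thesis unfolding stat_def using stat_ok uniq by (rule the_equality)
qed

lemma v_le: "v n U t \<le> 2 * (1 - real (2*n) * beta) ^ (t div Suc (8*n))"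
proof -
  have ne: "states n \<noteq> {}" using n3 by (auto simp: states_def)
  show ?thesis
    unfolding v_def stat_pis
  proof (subst Max_le_iff)
    show "finite ((\<lambda>x. \<Sum>y\<in>states n. \<bar>Kpow n U t x y - pis n y\<bar>) ` states n)" using finite_states by simp
    show "(\<lambda>x. \<Sum>y\<in>states n. \<bar>Kpow n U t x y - pis n y\<bar>) ` states n \<noteq> {}" using ne by simp
    show "\<forall>a\<in>(\<lambda>x. \<Sum>y\<in>states n. \<bar>Kpow n U t x y - pis n y\<bar>) ` states n. a \<le> 2 * (1 - real (2*n) * beta) ^ (t div Suc (8*n))"
      using Dist_states Dist_le cyc_lt by auto
  qed
qed

end



lemma ln2_ge: "ln (2::real) \<ge> 1/2"
proof -
  have "ln (1/2::real) \<le> 1/2 - 1" by (rule ln_le_minus_one) simp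
  moreover have "ln (1/2::real) = - ln 2" by (simp add: ln_div)
  ultimately show ?thesis by simp
qed

lemma theta_bound:
  assumes U3: "U \<ge> (3::nat)"
  shows "exp (- 2 / real U) \<le> 1 - 1 / real U"
proof -
  have x0: "0 \<le> 1 / real U" and x1: "1 / real U \<le> 1/2" using U3 by auto
  have "- (1/real U) - 2 * (1/real U)^2 \<le> ln (1 - 1/real U)" by (rule ln_one_minus_pos_lower_bound[OF x0 x1])
  moreover have "2 * (1/real U)^2 \<le> 1 / real U"
  proof -
    have "2 * (1/real U)^2 = (2 / real U) * (1 / real U)" by (simp add: power2_eq_square)
    also have "\<dots> \<le> 1 * (1 / real U)" using U3 x0 by (intro mult_right_mono) auto
    finally show ?thesis by simp
  qed
  ultimately have "- 2 / real U \<le> ln (1 - 1/real U)" by simp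
  then have "exp (- 2 / real U) \<le> exp (ln (1 - 1/real U))" by simp
  also have "\<dots> = 1 - 1 / real U" using U3 by simp
  finally show ?thesis .
qed

lemma beta_ge:
  assumes c: "c \<ge> 1" and n3: "n \<ge> 3" and U3: "U \<ge> 3" and h1: "real n / c \<le> real U" and h2: "real U \<le> c * real n"
  shows "exp (- 16 * c) / (32 * c) \<le> real (2*n) * beta n U"
proof -
  have Up: "real U > 0" using U3 by simp
  have np: "real n > 0" using n3 by simp
  have r1: "real n / real U \<le> c" using h1 c Up by (simp add: field_simps)
  have r2: "1 / c \<le> real n / real U" using h2 c Up np by (simp add: field_simps)
  have "exp (- 16 * c) \<le> exp (- 16 * (real n / real U))" using r1 by simp
  also have "exp (- 16 * (real n / real U)) = exp (- 2 / real U) ^ (8*n)"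
    by (simp add: exp_of_nat_mult[symmetric] field_simps)
  also have "\<dots> \<le> (1 - 1 / real U) ^ (8*n)" by (rule power_mono[OF theta_bound[OF U3]]) simp
  finally have th: "exp (- 16 * c) \<le> (1 - 1 / real U) ^ (8*n)" .
  have "exp (- 16 * c) / (32 * c) = (1 / c) * exp (- 16 * c) / 32" by simp
  also have "\<dots> \<le> (real n / real U) * (1 - 1 / real U) ^ (8*n) / 32"
    using r2 th c by (intro divide_right_mono mult_mono) auto
  also have "\<dots> = real (2*n) * beta n U" unfolding beta_def[OF n3 U3] using Up by (simp add: field_simps)
  finally show ?thesis .
qed

theorem lemma12:
  fixes c :: real
  assumes "c \<ge> 1"
  shows "\<exists>C>0. \<forall>(n::nat) (U::nat) (\<epsilon>::real) (t::nat).
           n \<ge> 3 \<longrightarrow> U \<ge> 3 \<longrightarrow> real n / c \<le> real U \<longrightarrow> real U \<le> c * real n \<longrightarrow>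
           0 < \<epsilon> \<longrightarrow> \<epsilon> \<le> 1/2 \<longrightarrow> real t \<ge> C * real n * ln (1/\<epsilon>) \<longrightarrow>
           v n U t \<le> \<epsilon>"
proof -
  define \<delta> where "\<delta> = exp (- 16 * c) / (32 * c)"
  have d0: "0 < \<delta>" using assms by (simp add: \<delta>_def)
  have d1: "\<delta> \<le> 1"
  proof -
    have "exp (- 16 * c) \<le> 1" using assms by simp
    also have "1 \<le> 32 * c" using assms by simp
    finally show ?thesis using assms by (simp add: \<delta>_def)
  qed
  define C where "C = 9 * (2 / \<delta> + 2)"
  have C0: "C > 0"
  proof -
    have "0 < 2 / \<delta>" using d0 by simp
    then show ?thesis unfolding C_def by (intro mult_pos_pos add_pos_pos) auto
  qed
  show ?thesis
  proof (intro exI[of _ C] conjI allI impI)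
    show "C > 0" by (rule C0)
    fix n U :: nat and \<epsilon> :: real and t :: nat
    assume n3: "n \<ge> 3" and U3: "U \<ge> 3" and h1: "real n / c \<le> real U" and h2: "real U \<le> c * real n"
      and e0: "0 < \<epsilon>" and e1: "\<epsilon> \<le> 1/2" and ht: "real t \<ge> C * real n * ln (1/\<epsilon>)"
    let ?m = "Suc (8*n)"
    let ?q = "t div ?m"
    let ?g = "1 - real (2*n) * beta n U"
    let ?L = "ln (1/\<epsilon>)"
    have bg: "\<delta> \<le> real (2*n) * beta n U" unfolding \<delta>_def by (rule beta_ge[OF assms n3 U3 h1 h2])
    have g0: "0 \<le> ?g" using gamma_bounds[OF n3 U3] by simp
    have gd: "?g \<le> 1 - \<delta>" using bg by simp
    have L2: "?L \<ge> ln 2"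
    proof -
      have "2 \<le> 1/\<epsilon>" using e0 e1 by (simp add: field_simps)
      then show ?thesis using e0 by (simp del: ln_div)
    qed
    have Lh: "?L \<ge> 1/2" using L2 ln2_ge by simp
    have "real t \<ge> C * real n * ?L" by (rule ht)
    have qlow: "real ?q \<ge> (2 / \<delta> + 2) * ?L - 1"
    proof -
      have "t < (?q + 1) * ?m"
      proof -
        have e: "?q * ?m + t mod ?m = t" by (rule div_mult_mod_eq)
        have "t mod ?m < ?m" by simp
        then have "t < ?q * ?m + ?m" using e by linarith
        then show ?thesis by (simp only: add_mult_distrib mult_1)
      qed
      then have "real t < real ((?q + 1) * ?m)" by (simp only: of_nat_less_iff)
      then have "real t < (real ?q + 1) * real ?m" by (simp only: of_nat_mult of_nat_add of_nat_1)
      then have a: "real t / real ?m < real ?q + 1" by (simp add: field_simps)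
      have mle: "real ?m \<le> 9 * real n" using n3 by simp
      have t0: "0 \<le> real t" by simp
      have "C * real n * ?L / (9 * real n) = (2 / \<delta> + 2) * ?L" using n3 by (simp add: C_def field_simps)
      moreover have "C * real n * ?L / (9 * real n) \<le> real t / (9 * real n)"
        using ht n3 by (intro divide_right_mono) auto
      moreover have "real t / (9 * real n) \<le> real t / real ?m"
        using mle t0 by (intro divide_left_mono) auto
      ultimately show ?thesis using a by linarith
    qed
    have dq: "\<delta> * real ?q \<ge> ln 2 + ?L"
    proof -
      have "\<delta> * real ?q \<ge> \<delta> * ((2 / \<delta> + 2) * ?L - 1)" using qlow d0 by (intro mult_left_mono) auto
      also have "\<delta> * ((2 / \<delta> + 2) * ?L - 1) = 2 * ?L + \<delta> * (2 * ?L - 1)" using d0 by (simp add: field_simps)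
      finally have "\<delta> * real ?q \<ge> 2 * ?L + \<delta> * (2 * ?L - 1)" .
      moreover have "\<delta> * (2 * ?L - 1) \<ge> 0" using d0 Lh by simp
      ultimately show ?thesis using L2 by linarith
    qed
    have "v n U t \<le> 2 * ?g ^ ?q" by (rule v_le[OF n3 U3])
    also have "\<dots> \<le> 2 * (1 - \<delta>) ^ ?q" using g0 gd by (intro mult_left_mono power_mono) auto
    also have "(1 - \<delta>) ^ ?q \<le> exp (- \<delta>) ^ ?q"
      using d1 exp_ge_add_one_self[of "- \<delta>"] by (intro power_mono) auto
    also have "exp (- \<delta>) ^ ?q = exp (- (\<delta> * real ?q))" by (simp add: exp_of_nat_mult[symmetric] mult.commute)
    also have "exp (- (\<delta> * real ?q)) \<le> exp (- (ln 2 + ?L))" using dq by simp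
    also have "exp (- (ln 2 + ?L)) = \<epsilon> / 2" using e0 by (simp add: exp_minus exp_add ln_div exp_diff)
    finally show "v n U t \<le> \<epsilon>" by simp
  qed
qed



end
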